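(* Let $n\ge5$ and let $\varrho:H_n\to\mathcal L$ be a homomorphism with $\mathrm{Area}\,\varrho=(n-4)\pi$. Then for every $i$ (indices mod $n$) there is $q_i\in\mathrm BW$ with $\varrho(r_i)=R(q_i)$; moreover $q_{i-1}\ne q_i$ and $\varrho(r_ir_{i-1})$ is hyperbolic for every $i$. Furthermore, fix $i$, let $x\in\mathrm SW$ be a fixed point of $\varrho(r_ir_{i-1})$, put $p_{i-2}:=x$ and $p_k:=\varrho(r_k)p_{k-1}$ for $k=i-1,i,i+1,\dots$ (so $p_i=p_{i-2}$); then the cycle $p_i,p_{i+1},\dots,p_{i+n-3}$ of points of $\mathrm SW$ is positive.
   Context: Let $W$ be a 2-dimensional complex vector space with a hermitian form $\langle\cdot,\cdot\rangle$ of signature $(+,-)$. In $\mathbb{CP}W$ let $\mathrm BW$ be the negative points (the Poincaré disc, curvature $-1$, oriented by its complex structure), $\mathrm SW$ the isotropic points (its ideal boundary circle), $\overline{\mathrm B}W=\mathrm BW\cup\mathrm SW$. $\mathcal L=\mathrm{PU}(W)$ is the group of orientation-preserving isometries of $\mathrm BW$. For $q\in\mathrm BW$, $R(q)\in\mathcal L$ is the reflection in $q$ (the involution of $\mathcal L$ fixing $q$). An element of $\mathcal L$ is hyperbolic if it has exactly two fixed points in $\overline{\mathrm B}W$, both in $\mathrm SW$. Oriented triangle area: $\mathrm{Area}\,\Delta(p_1,p_2,p_3)=2\arg(-\langle p_1,p_2\rangle\langle p_2,p_3\rangle\langle p_3,p_1\rangle)$ ($\arg\in[-\pi,\pi]$)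 if no two vertices are equal isotropic points, $0$ otherwise (signed area, positive for counterclockwise vertices). $\mathrm{Area}(p_1,\dots,p_m):=\sum_{k=1}^m\mathrm{Area}\,\Delta(c,p_k,p_{k+1})$ (indices mod $m$), independent of $c\in\overline{\mathrm B}W$. $H_n$ ($n\ge5$) is the group generated by $r_1,\dots,r_n$ with relations $r_i^2=1$, $r_n\cdots r_1=1$; indices of the $r_i$ are mod $n$. For a homomorphism $\varrho:H_n\to\mathcal L$, $\mathrm{Area}\,\varrho:=\mathrm{Area}(p_1,\dots,p_n)$ where $p_0\in\overline{\mathrm B}W$ is arbitrary and $p_k=\varrho(r_k)p_{k-1}$ (this does not depend on $p_0$). A cycle $z_1,\dots,z_k\in\mathrm SW$, $k\ge3$, is positive (negative) if the points are pairwise distinct and listed in the counterclockwise (clockwise) order along $\mathrm SW$. *)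

theory Defs
  imports "HOL-Analysis.Analysis"
begin

text \<open>W = C^2 with hermitian form of signature (+,-), linear in the first argument.
Points of CP W are represented by nonzero vectors; two vectors give the same
point iff they are proportional.\<close>

type_synonym cvec = "complex ^ 2"
type_synonym cmat = "complex ^ 2 ^ 2"

definition herm :: "cvec \<Rightarrow> cvec \<Rightarrow> complex" where
  "herm v w = v$1 * cnj (w$1) - v$2 * cnj (w$2)"

definition proj_eq :: "cvec \<Rightarrow> cvec \<Rightarrow> bool" where
  "proj_eq v w \<longleftrightarrow> v \<noteq> 0 \<and> w \<noteq> 0 \<and> (\<exists>c. c \<noteq> 0 \<and> w = c *s v)"

text \<open>negative points (BW), isotropic points (SW), closed ball\<close>
definition negative_pt :: "cvec \<Rightarrow> bool" where
  "negative_pt v \<longleftrightarrow> v \<noteq> 0 \<and> Re (herm v v) < 0"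

definition isotropic_pt :: "cvec \<Rightarrow> bool" where
  "isotropic_pt v \<longleftrightarrow> v \<noteq> 0 \<and> herm v v = 0"

definition cball_pt :: "cvec \<Rightarrow> bool" where
  "cball_pt v \<longleftrightarrow> negative_pt v \<or> isotropic_pt v"

text \<open>U(W): matrices preserving the hermitian form; PU(W) = U(W) modulo scalars.\<close>
definition unitary_U :: "cmat \<Rightarrow> bool" where
  "unitary_U A \<longleftrightarrow> (\<forall>v w. herm (A *v v) (A *v w) = herm v w)"

definition pu_eq :: "cmat \<Rightarrow> cmat \<Rightarrow> bool" where
  "pu_eq A B \<longleftrightarrow> (\<exists>c. c \<noteq> 0 \<and> B = (\<chi> i j. c * A$i$j))"

text \<open>Reflection in q: v \<mapsto> 2<v,q>/<q,q> q - v (fixes q, acts as -1 on q^perp).\<close>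
definition sgnJ :: "2 \<Rightarrow> complex" where
  "sgnJ j = (if j = 1 then 1 else -1)"

definition refl_mat :: "cvec \<Rightarrow> cmat" where
  "refl_mat q = (\<chi> i j. 2 * q$i * cnj (q$j) * sgnJ j / herm q q - (if i = j then 1 else 0))"

definition fixes_pt :: "cmat \<Rightarrow> cvec \<Rightarrow> bool" where
  "fixes_pt A v \<longleftrightarrow> v \<noteq> 0 \<and> (\<exists>c. A *v v = c *s v)"

definition hyperbolic :: "cmat \<Rightarrow> bool" where
  "hyperbolic A \<longleftrightarrow> (\<exists>x y. isotropic_pt x \<and> isotropic_pt y \<and> \<not> proj_eq x y \<and>
      fixes_pt A x \<and> fixes_pt A y \<and>
      (\<forall>z. cball_pt z \<and> fixes_pt A z \<longrightarrow> proj_eq z x \<or> proj_eq z y))"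

definition tri_area :: "cvec \<Rightarrow> cvec \<Rightarrow> cvec \<Rightarrow> real" where
  "tri_area p1 p2 p3 =
    (if (isotropic_pt p1 \<and> proj_eq p1 p2) \<or> (isotropic_pt p2 \<and> proj_eq p2 p3)
        \<or> (isotropic_pt p3 \<and> proj_eq p3 p1) then 0
     else 2 * Arg (- (herm p1 p2 * herm p2 p3 * herm p3 p1)))"

definition poly_area :: "cvec \<Rightarrow> cvec list \<Rightarrow> real" where
  "poly_area c ps = (\<Sum>k<length ps. tri_area c (ps ! k) (ps ! ((k + 1) mod length ps)))"

text \<open>the centre of the disc, used as the (arbitrary) base points c and p_0\<close>
definition origin_pt :: cvec where
  "origin_pt = (\<chi> i. if i = 1 then 0 else 1)"

text \<open>A homomorphism H_n \<rightarrow> PU(W) is given by the images G i of the generators r_i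
(indices mod n, i.e. G is n-periodic), each in U(W), satisfying the relations
r_i^2 = 1 and r_n \<cdots> r_1 = 1 in PU(W).\<close>
fun lprod :: "(int \<Rightarrow> cmat) \<Rightarrow> nat \<Rightarrow> cmat" where
  "lprod G 0 = mat 1"
| "lprod G (Suc k) = G (int (Suc k)) ** lprod G k"

definition is_hom_H :: "nat \<Rightarrow> (int \<Rightarrow> cmat) \<Rightarrow> bool" where
  "is_hom_H n G \<longleftrightarrow> (\<forall>i. G (i + int n) = G i) \<and> (\<forall>i. unitary_U (G i)) \<and>
     (\<forall>i. pu_eq (mat 1) (G i ** G i)) \<and> pu_eq (mat 1) (lprod G n)"

fun orbit :: "(int \<Rightarrow> cmat) \<Rightarrow> cvec \<Rightarrow> nat \<Rightarrow> cvec" where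
  "orbit G p0 0 = p0"
| "orbit G p0 (Suc k) = G (int (Suc k)) *v orbit G p0 k"

definition area_rho :: "(int \<Rightarrow> cmat) \<Rightarrow> nat \<Rightarrow> real" where
  "area_rho G n = poly_area origin_pt (map (orbit G origin_pt) [1..<n+1])"

text \<open>chain G i x j = p_{i-2+j}, where p_{i-2} = x and p_k = G k p_{k-1}\<close>
fun chain :: "(int \<Rightarrow> cmat) \<Rightarrow> int \<Rightarrow> cvec \<Rightarrow> nat \<Rightarrow> cvec" where
  "chain G i x 0 = x"
| "chain G i x (Suc j) = G (i - 2 + int (Suc j)) *v chain G i x j"

text \<open>SW is identified with the unit circle via the holomorphic chart v \<mapsto> v1/v2 of CP W
(which maps BW onto the open unit disc, preserving the complex orientation).\<close>
definition bdry_coord :: "cvec \<Rightarrow> complex" where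
  "bdry_coord v = v$1 / v$2"

definition ccw_list :: "complex list \<Rightarrow> bool" where
  "ccw_list zs \<longleftrightarrow> (\<exists>\<theta>::nat \<Rightarrow> real.
     (\<forall>j. Suc j < length zs \<longrightarrow> \<theta> j < \<theta> (Suc j)) \<and>
     \<theta> (length zs - 1) < \<theta> 0 + 2 * pi \<and>
     (\<forall>j < length zs. zs ! j = cis (\<theta> j)))"

definition positive_cycle :: "cvec list \<Rightarrow> bool" where
  "positive_cycle ps \<longleftrightarrow> length ps \<ge> 3 \<and> (\<forall>p \<in> set ps. isotropic_pt p) \<and>
     (\<forall>j k. j < length ps \<and> k < length ps \<and> j \<noteq> k \<longrightarrow> \<not> proj_eq (ps ! j) (ps ! k)) \<and>
     ccw_list (map bdry_coord ps)"

end

theory Submission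
  imports Defs
begin


lemma mv_comp: "((A::cmat) *v v) $ i = A$i$1 * v$1 + A$i$2 * v$2"
  by (simp add: matrix_vector_mult_def sum_2)

lemma herm_smult_left: "herm (c *s v) w = c * herm v w"
  by (simp add: herm_def algebra_simps)
lemma herm_smult_right: "herm v (c *s w) = cnj c * herm v w"
  by (simp add: herm_def algebra_simps)
lemma herm_cnj: "cnj (herm v w) = herm w v"
  by (simp add: herm_def)
lemma herm_self: "herm v v = of_real ((cmod (v$1))^2 - (cmod (v$2))^2)"
  by (simp add: herm_def complex_norm_square[symmetric])
lemma herm_self_real: "Im (herm v v) = 0"
  by (simp add: herm_self)
lemma herm_zero_left[simp]: "herm 0 w = 0" by (simp add: herm_def)
lemma herm_zero_right[simp]: "herm v 0 = 0" by (simp add: herm_def)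

lemma herm_mult_cnj: "herm v w * herm w v = of_real ((cmod (herm v w))^2)"
  by (metis complex_norm_square herm_cnj mult.commute)

lemma vec2_eq: "(v::cvec) = w \<longleftrightarrow> v$1 = w$1 \<and> v$2 = w$2"
  by (simp add: vec_eq_iff forall_2)

lemma nonzero_vec: "(v::cvec) \<noteq> 0 \<longleftrightarrow> v$1 \<noteq> 0 \<or> v$2 \<noteq> 0"
  by (simp add: vec_eq_iff forall_2)

lemma cball_props:
  assumes "cball_pt v"
  shows "v$2 \<noteq> 0" "cmod (v$1) \<le> cmod (v$2)" "Re (herm v v) \<le> 0" "v \<noteq> 0"
proof -
  have nz: "v \<noteq> 0" and le: "Re (herm v v) \<le> 0"
    using assms by (auto simp: cball_pt_def negative_pt_def isotropic_pt_def)
  then show "Re (herm v v) \<le> 0" "v \<noteq> 0" by auto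
  from le have "(cmod (v$1))^2 \<le> (cmod (v$2))^2" by (simp add: herm_self)
  then show le2: "cmod (v$1) \<le> cmod (v$2)" by (simp add: power2_le_iff_abs_le)
  show "v$2 \<noteq> 0"
  proof
    assume "v$2 = 0"
    with le2 have "v$1 = 0" by simp
    with \<open>v$2 = 0\<close> nz show False by (simp add: nonzero_vec)
  qed
qed

definition TT :: "cvec \<Rightarrow> cvec \<Rightarrow> cvec \<Rightarrow> complex" where
  "TT a b d = - (herm a b * herm b d * herm d a)"

lemma tri_area_eq: "tri_area a b d = 2 * Arg (TT a b d)"
proof -
  have "TT a b d = 0" if "(isotropic_pt a \<and> proj_eq a b) \<or> (isotropic_pt b \<and> proj_eq b d)
        \<or> (isotropic_pt d \<and> proj_eq d a)"
    using that
    by (auto simp: TT_def isotropic_pt_def proj_eq_def herm_smult_left herm_smult_right)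
  then show ?thesis by (auto simp: tri_area_def Arg_zero TT_def)
qed

lemma perp_identity:
  fixes a b c :: cvec
  defines "e \<equiv> vector [cnj (c$2), cnj (c$1)] :: cvec"
  shows "herm c c * herm a b = herm a c * herm c b - herm a e * herm e b"
  unfolding e_def herm_def by (simp add: algebra_simps)

lemma perp_orth: "herm (vector [cnj (c$2), cnj (c$1)] :: cvec) c = 0"
  by (simp add: herm_def)
lemma perp_self: "herm (vector [cnj (c$2), cnj (c$1)] :: cvec) (vector [cnj (c$2), cnj (c$1)]) = - herm c c"
  by (simp add: herm_def algebra_simps)




lemma negative_self: "negative_pt c \<Longrightarrow> herm c c = - of_real (- Re (herm c c)) \<and> - Re (herm c c) > 0"
  unfolding negative_pt_def using herm_self_real[of c]
  by (simp add: complex_eq_iff)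

lemma negbase_Re:
  assumes c: "negative_pt c" and a: "Re (herm a a) \<le> 0" and b: "Re (herm b b) \<le> 0"
  shows "Re (TT c a b) > 0 \<or> TT c a b = 0"
proof -
  define e :: cvec where "e = vector [cnj (c$2), cnj (c$1)]"
  define s where "s = - Re (herm c c)"
  have s: "s > 0" "herm c c = - of_real s" using negative_self[OF c] by (auto simp: s_def)
  define \<alpha> where "\<alpha> = herm a c"
  define \<beta> where "\<beta> = herm b c"
  define ae where "ae = herm a e"
  define eb where "eb = herm e b"
  have id1: "herm c c * herm a b = \<alpha> * cnj \<beta> - ae * eb"
    using perp_identity[of c a b] by (simp add: e_def \<alpha>_def \<beta>_def ae_def eb_def herm_cnj)
  have id2: "herm c c * herm a a = \<alpha> * cnj \<alpha> - ae * cnj ae"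
    using perp_identity[of c a a] by (simp add: e_def \<alpha>_def ae_def herm_cnj)
  have id3: "herm c c * herm b b = \<beta> * cnj \<beta> - cnj eb * eb"
    using perp_identity[of c b b] by (simp add: e_def \<beta>_def eb_def herm_cnj)
  have "Re (herm c c * herm a a) \<ge> 0"
    using a s by (simp add: mult_nonneg_nonpos)
  then have "Re (\<alpha> * cnj \<alpha> - ae * cnj ae) \<ge> 0" using id2 by simp
  then have nae: "(cmod ae)^2 \<le> (cmod \<alpha>)^2"
    by (simp add: complex_mult_cnj cmod_power2)
  have "Re (herm c c * herm b b) \<ge> 0"
    using b s by (simp add: mult_nonneg_nonpos)
  then have "Re (\<beta> * cnj \<beta> - cnj eb * eb) \<ge> 0" using id3 by simp
  then have neb: "(cmod eb)^2 \<le> (cmod \<beta>)^2"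
    by (simp add: complex_mult_cnj cmod_power2 mult.commute)
  have ae_le: "cmod ae \<le> cmod \<alpha>" using nae by (simp add: power2_le_iff_abs_le)
  have eb_le: "cmod eb \<le> cmod \<beta>" using neb by (simp add: power2_le_iff_abs_le)
  define X where "X = (cmod \<alpha>)^2 * (cmod \<beta>)^2"
  define Y where "Y = cnj \<alpha> * \<beta> * ae * eb"
  have hab: "herm a b = - (\<alpha> * cnj \<beta> - ae * eb) / of_real s"
    using id1 s by (simp add: field_simps)
  have XX: "cnj \<alpha> * \<beta> * (\<alpha> * cnj \<beta>) = of_real X"
    unfolding X_def of_real_mult complex_norm_square by algebra
  have T: "TT c a b = (of_real X - Y) / of_real s"
  proof -
    have "TT c a b = - (cnj \<alpha> * herm a b * \<beta>)"
      by (simp add: TT_def \<alpha>_def \<beta>_def herm_cnj mult_ac)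
    also have "\<dots> = (cnj \<alpha> * \<beta> * (\<alpha> * cnj \<beta>) - Y) / of_real s"
      using s by (simp add: hab Y_def field_simps)
    finally show ?thesis by (simp only: XX)
  qed
  have nY: "cmod Y \<le> X"
  proof -
    have "cmod Y = cmod \<alpha> * cmod \<beta> * cmod ae * cmod eb" by (simp add: Y_def norm_mult)
    also have "\<dots> \<le> cmod \<alpha> * cmod \<beta> * cmod \<alpha> * cmod \<beta>"
      by (intro mult_mono ae_le eb_le) auto
    finally show ?thesis by (simp add: X_def power2_eq_square mult_ac)
  qed
  have ReY: "Re Y \<le> cmod Y" by (rule complex_Re_le_cmod)
  show ?thesis
  proof (cases "Re Y = X")
    case True
    have "(cmod Y)^2 \<le> X^2" by (rule power_mono[OF nY norm_ge_zero])
    then have "(Re Y)^2 + (Im Y)^2 \<le> X^2" by (simp add: cmod_power2)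
    then have "Im Y = 0" using True by simp
    then have "Y = of_real X" using True by (simp add: complex_eq_iff)
    then show ?thesis using T by simp
  next
    case False
    then have "Re Y < X" using ReY nY by simp
    then have "Re (of_real X - Y) > 0" by simp
    then show ?thesis using T s by (simp add: Re_divide_of_real)
  qed
qed

lemma negbase_Arg:
  assumes "negative_pt c" "Re (herm a a) \<le> 0" "Re (herm b b) \<le> 0"
  shows "\<bar>tri_area c a b\<bar> < pi"
  using negbase_Re[OF assms] Arg_Re_pos[of "TT c a b"] by (auto simp: tri_area_eq)




lemma cnj_sq: "z * cnj z = (complex_of_real (cmod z))^2"
  by (simp add: complex_norm_square[symmetric])

lemma TT_scale1: "TT (l *s a) b d = of_real ((cmod l)^2) * TT a b d"
  by (simp add: TT_def herm_smult_left herm_smult_right cnj_sq mult_ac)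
lemma TT_scale2: "TT a (l *s b) d = of_real ((cmod l)^2) * TT a b d"
  by (simp add: TT_def herm_smult_left herm_smult_right cnj_sq mult_ac)
lemma TT_scale3: "TT a b (l *s d) = of_real ((cmod l)^2) * TT a b d"
  by (simp add: TT_def herm_smult_left herm_smult_right cnj_sq mult_ac)

lemma Arg_scale: "l \<noteq> 0 \<Longrightarrow> Arg (of_real ((cmod l)^2) * z) = Arg z"
  by (rule Arg_times_of_real) simp

lemma area_scale1: "l \<noteq> 0 \<Longrightarrow> tri_area (l *s a) b d = tri_area a b d"
  by (simp only: tri_area_eq TT_scale1 Arg_scale not_False_eq_True)
lemma area_scale2: "l \<noteq> 0 \<Longrightarrow> tri_area a (l *s b) d = tri_area a b d"
  by (simp only: tri_area_eq TT_scale2 Arg_scale not_False_eq_True)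
lemma area_scale3: "l \<noteq> 0 \<Longrightarrow> tri_area a b (l *s d) = tri_area a b d"
  by (simp only: tri_area_eq TT_scale3 Arg_scale not_False_eq_True)

lemma area_unitary: "unitary_U A \<Longrightarrow> tri_area (A *v a) (A *v b) (A *v d) = tri_area a b d"
  by (simp add: tri_area_eq TT_def unitary_U_def)

lemma unitary_inj: assumes "unitary_U A" "A *v v = 0" shows "v = 0"
proof -
  have "herm v w = 0" for w using assms unfolding unitary_U_def by (metis herm_zero_left)
  from this[of "vector [1,0]"] this[of "vector [0,1]"] show ?thesis
    by (simp add: herm_def vec2_eq)
qed

lemma unitary_herm: "unitary_U A \<Longrightarrow> herm (A *v v) (A *v w) = herm v w"
  by (simp add: unitary_U_def)

lemma unitary_negative: "unitary_U A \<Longrightarrow> negative_pt v \<Longrightarrow> negative_pt (A *v v)"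
  using unitary_inj by (auto simp: negative_pt_def unitary_U_def)
lemma unitary_isotropic: "unitary_U A \<Longrightarrow> isotropic_pt v \<Longrightarrow> isotropic_pt (A *v v)"
  using unitary_inj by (auto simp: isotropic_pt_def unitary_U_def)
lemma unitary_cball: "unitary_U A \<Longrightarrow> cball_pt v \<Longrightarrow> cball_pt (A *v v)"
  using unitary_negative unitary_isotropic by (auto simp: cball_pt_def)

lemma unitary_mult: "unitary_U A \<Longrightarrow> unitary_U B \<Longrightarrow> unitary_U (A ** B)"
  by (simp add: unitary_U_def matrix_vector_mul_assoc[symmetric])

lemma herm_smult_both: "herm (l *s v) (l *s v) = of_real ((cmod l)^2) * herm v v"
  by (simp add: herm_smult_left herm_smult_right cnj_sq mult_ac)
lemma smult_negative: "l \<noteq> 0 \<Longrightarrow> negative_pt v \<Longrightarrow> negative_pt (l *s v)"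
  unfolding negative_pt_def herm_smult_both by (auto simp: mult_pos_neg)
lemma smult_isotropic: "l \<noteq> 0 \<Longrightarrow> isotropic_pt v \<Longrightarrow> isotropic_pt (l *s v)"
  by (auto simp: isotropic_pt_def herm_smult_left herm_smult_right)
lemma smult_cball: "l \<noteq> 0 \<Longrightarrow> cball_pt v \<Longrightarrow> cball_pt (l *s v)"
  using smult_negative smult_isotropic by (auto simp: cball_pt_def)
lemma neg_herm_nz:
  assumes c: "negative_pt c" and x: "cball_pt x"
  shows "herm c x \<noteq> 0"
proof
  assume h: "herm c x = 0"
  have x2: "x$2 \<noteq> 0" "cmod (x$1) \<le> cmod (x$2)" using cball_props[OF x] by auto
  have "Re (herm c c) < 0" using c by (simp add: negative_pt_def)
  then have "(cmod (c$1))^2 < (cmod (c$2))^2" by (simp add: herm_self)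
  then have c12: "cmod (c$1) < cmod (c$2)" by (simp add: power2_less_imp_less)
  from h have "c$1 * cnj (x$1) = c$2 * cnj (x$2)" by (simp add: herm_def)
  then have "cmod (c$1) * cmod (x$1) = cmod (c$2) * cmod (x$2)" by (metis complex_mod_cnj norm_mult)
  moreover have "cmod (c$2) * cmod (x$2) > cmod (c$1) * cmod (x$2)" using c12 x2 by simp
  moreover have "cmod (c$1) * cmod (x$2) \<ge> cmod (c$1) * cmod (x$1)" using x2 by (simp add: mult_left_mono)
  ultimately show False by simp
qed

lemma cball_herm_zero:
  assumes x: "cball_pt x" and y: "cball_pt y" and h: "herm x y = 0"
  shows "\<exists>l. l \<noteq> 0 \<and> y = l *s x"
proof -
  have x2: "x$2 \<noteq> 0" "cmod (x$1) \<le> cmod (x$2)" using cball_props[OF x] by auto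
  have y2: "y$2 \<noteq> 0" "cmod (y$1) \<le> cmod (y$2)" using cball_props[OF y] by auto
  from h have e: "x$1 * cnj (y$1) = x$2 * cnj (y$2)" by (simp add: herm_def)
  then have m: "cmod (x$1) * cmod (y$1) = cmod (x$2) * cmod (y$2)" by (metis complex_mod_cnj norm_mult)
  have "cmod (x$1) = cmod (x$2)"
  proof (rule ccontr)
    assume "cmod (x$1) \<noteq> cmod (x$2)"
    then have "cmod (x$1) < cmod (x$2)" using x2 by simp
    have "cmod (x$1) * cmod (y$1) \<le> cmod (x$1) * cmod (y$2)"
      by (rule mult_left_mono) (use y2 in auto)
    also have "\<dots> < cmod (x$2) * cmod (y$2)"
      using \<open>cmod (x$1) < cmod (x$2)\<close> y2 by (simp add: mult_strict_right_mono)
    finally show False using m by simp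
  qed
  then have xx: "x$1 * cnj (x$1) = x$2 * cnj (x$2)" by (simp add: complex_norm_square[symmetric])
  have x1: "x$1 \<noteq> 0" using \<open>cmod (x$1) = cmod (x$2)\<close> x2 by auto
  from e have e': "cnj (x$1) * y$1 = cnj (x$2) * y$2" by (metis complex_cnj_cnj complex_cnj_mult)
  have "y$1 = (y$2 / x$2) * x$1"
  proof -
    have "y$1 = cnj (x$2) * y$2 / cnj (x$1)" using e' x1 by (simp add: field_simps)
    also have "\<dots> = (y$2 / x$2) * x$1" using x1 x2 xx by (simp add: field_simps)
    finally show ?thesis .
  qed
  then show ?thesis using y2 x2 by (intro exI[of _ "y$2 / x$2"]) (simp add: vec2_eq)
qed

lemma TT_swap: "TT c y x = cnj (TT c x y)"
  by (simp add: TT_def herm_cnj mult_ac)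

lemma area_antisym:
  assumes "negative_pt c" "cball_pt x" "cball_pt y"
  shows "tri_area c y x = - tri_area c x y"
proof -
  have "Re (TT c x y) > 0 \<or> TT c x y = 0"
    using negbase_Re assms cball_props by blast
  then have "TT c x y \<in> \<real> \<Longrightarrow> Arg (TT c x y) = 0"
    by (auto simp: Arg_real)
  moreover have "tri_area c y x = 2 * Arg (cnj (TT c x y))" by (simp only: tri_area_eq TT_swap[of c y x])
  ultimately show ?thesis by (auto simp: tri_area_eq Arg_cnj)
qed

lemma area_degen1:
  assumes "negative_pt c" shows "tri_area c c x = 0"
proof -
  define r where "r = (- Re (herm c c)) * (cmod (herm c x))^2"
  have r: "r \<ge> 0" using negative_self[OF assms] by (simp add: r_def mult_nonpos_nonneg)
  have "TT c c x = - herm c c * (herm c x * cnj (herm c x))" by (simp add: TT_def herm_cnj mult_ac)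
  also have "\<dots> = of_real r"
    using negative_self[OF assms] by (simp add: r_def complex_norm_square[symmetric])
  finally have "TT c c x = of_real r" .
  then show ?thesis using r by (simp add: tri_area_eq Arg_of_real)
qed

lemma area_degen2:
  assumes "negative_pt c" shows "tri_area c x c = 0"
proof -
  define r where "r = (- Re (herm c c)) * (cmod (herm c x))^2"
  have r: "r \<ge> 0" using negative_self[OF assms] by (simp add: r_def mult_nonpos_nonneg)
  have "TT c x c = - herm c c * (herm c x * cnj (herm c x))" by (simp add: TT_def herm_cnj mult_ac)
  also have "\<dots> = of_real r"
    using negative_self[OF assms] by (simp add: r_def complex_norm_square[symmetric])
  finally have "TT c x c = of_real r" .
  then show ?thesis using r by (simp add: tri_area_eq Arg_of_real)
qed




lemma arg4:
  assumes eq: "z1 * z2 * of_real r1 = z3 * z4 * of_real r2"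
    and r: "r1 > 0" "r2 > 0"
    and nz: "z1 \<noteq> 0" "z2 \<noteq> 0" "z3 \<noteq> 0" "z4 \<noteq> 0"
    and b: "\<bar>Arg z1\<bar> < pi/2" "\<bar>Arg z2\<bar> < pi/2" "\<bar>Arg z3\<bar> < pi/2" "\<bar>Arg z4\<bar> < pi/2"
  shows "Arg z1 + Arg z2 = Arg z3 + Arg z4"
proof -
  have "sgn (z1 * z2 * of_real r1) = sgn (z3 * z4 * of_real r2)" using eq by simp
  then have "sgn z1 * sgn z2 = sgn z3 * sgn z4" using r by (simp add: sgn_mult sgn_of_real)
  then have "cis (Arg z1) * cis (Arg z2) = cis (Arg z3) * cis (Arg z4)" using nz by (simp add: cis_Arg)
  then have "cis (Arg z1 + Arg z2) = cis (Arg z3 + Arg z4)" by (simp add: cis_mult)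
  then have "cis ((Arg z1 + Arg z2) - (Arg z3 + Arg z4)) = 1" by (simp add: cis_divide[symmetric])
  then have "Re (cis ((Arg z1 + Arg z2) - (Arg z3 + Arg z4))) = 1" by simp
  then have "cos ((Arg z1 + Arg z2) - (Arg z3 + Arg z4)) = 1" by simp
  then obtain k :: int where k: "(Arg z1 + Arg z2) - (Arg z3 + Arg z4) = k * 2 * pi"
    by (auto simp: cos_one_2pi_int)
  have "\<bar>(Arg z1 + Arg z2) - (Arg z3 + Arg z4)\<bar> < 2 * pi" using b by linarith
  then have "\<bar>real_of_int k\<bar> * (2 * pi) < 1 * (2 * pi)" using k by (simp add: abs_mult)
  then have "\<bar>real_of_int k\<bar> < 1" using pi_gt_zero by (meson mult_less_cancel_right_pos zero_less_mult_iff zero_less_numeral)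
  then have "k = 0" by linarith
  then show ?thesis using k by simp
qed

lemma negbase_Arg_half:
  assumes "negative_pt c" "cball_pt a" "cball_pt b"
  shows "\<bar>Arg (TT c a b)\<bar> < pi/2"
  using negbase_Re[OF assms(1)] cball_props[OF assms(2)] cball_props[OF assms(3)] Arg_Re_pos by blast

lemma neg_cball: "negative_pt c \<Longrightarrow> cball_pt c"
  by (simp add: cball_pt_def)

lemma herm_nz_sym: "herm a b \<noteq> 0 \<Longrightarrow> herm b a \<noteq> 0"
  by (metis complex_cnj_zero_iff herm_cnj)

lemma base_change:
  assumes c: "negative_pt c" and c': "negative_pt c'" and x: "cball_pt x" and y: "cball_pt y"
  shows "tri_area c' x y - tri_area c x y = tri_area c c' x - tri_area c c' y"
proof (cases "herm x y = 0")
  case True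
  then obtain l where l: "l \<noteq> 0" "y = l *s x" using cball_herm_zero[OF x y] by auto
  have "tri_area c' x y = 0" "tri_area c x y = 0" using True by (simp_all add: tri_area_eq TT_def Arg_zero)
  moreover have "tri_area c c' y = tri_area c c' x" using l area_scale3 by simp
  ultimately show ?thesis by simp
next
  case False
  have h1: "herm c' x \<noteq> 0" "herm c' y \<noteq> 0" "herm c x \<noteq> 0" "herm c y \<noteq> 0" "herm c c' \<noteq> 0"
    using neg_herm_nz c c' x y neg_cball by auto
  then have h2: "herm x c' \<noteq> 0" "herm y c' \<noteq> 0" "herm x c \<noteq> 0" "herm y c \<noteq> 0" "herm c' c \<noteq> 0"
    using herm_nz_sym by auto
  define r1 where "r1 = (cmod (herm c x))^2"
  define r2 where "r2 = (cmod (herm y c'))^2"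
  have r: "r1 > 0" "r2 > 0" using h1 h2 by (auto simp: r1_def r2_def)
  have eq: "TT c' x y * TT c c' y * of_real r1 = TT c x y * TT c c' x * of_real r2"
    unfolding r1_def r2_def complex_norm_square herm_cnj TT_def by algebra
  have nz: "TT c' x y \<noteq> 0" "TT c c' y \<noteq> 0" "TT c x y \<noteq> 0" "TT c c' x \<noteq> 0"
    using h1 h2 False by (auto simp: TT_def)
  have "Arg (TT c' x y) + Arg (TT c c' y) = Arg (TT c x y) + Arg (TT c c' x)"
    by (rule arg4[OF eq r nz negbase_Arg_half negbase_Arg_half negbase_Arg_half negbase_Arg_half])
       (simp_all add: c c' x y neg_cball)
  then show ?thesis by (simp add: tri_area_eq)
qed




lemma origin_negative: "negative_pt origin_pt"
  by (simp add: negative_pt_def origin_pt_def herm_def vec2_eq)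

lemma sum_mod_shift:
  assumes "m > 0" shows "(\<Sum>k<m. f (Suc k mod m)) = (\<Sum>k<m. f k)"
proof -
  obtain m' where m: "m = Suc m'" using assms by (cases m) auto
  have "(\<Sum>k<Suc m'. f (Suc k mod Suc m')) = (\<Sum>k<m'. f (Suc k mod Suc m')) + f 0"
    by (simp add: sum.lessThan_Suc)
  also have "(\<Sum>k<m'. f (Suc k mod Suc m')) = (\<Sum>k<m'. f (Suc k))"
    by (rule sum.cong) auto
  also have "(\<Sum>k<m'. f (Suc k)) + f 0 = (\<Sum>k<Suc m'. f k)"
    by (simp only: sum.lessThan_Suc_shift add.commute)
  finally show ?thesis using m by simp
qed

lemma poly_base_change:
  assumes c: "negative_pt c" and c': "negative_pt c'" and ps: "\<forall>p\<in>set ps. cball_pt p"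
  shows "poly_area c ps = poly_area c' ps"
proof (cases "ps = []")
  case True then show ?thesis by (simp add: poly_area_def)
next
  case False
  define m where "m = length ps"
  have m: "m > 0" using False by (simp add: m_def)
  have cb: "cball_pt (ps ! k)" if "k < m" for k using ps that by (simp add: m_def)
  have "poly_area c' ps - poly_area c ps =
        (\<Sum>k<m. tri_area c' (ps ! k) (ps ! (Suc k mod m)) - tri_area c (ps ! k) (ps ! (Suc k mod m)))"
    by (simp add: poly_area_def m_def sum_subtractf)
  also have "\<dots> = (\<Sum>k<m. tri_area c c' (ps ! k) - tri_area c c' (ps ! (Suc k mod m)))"
    by (rule sum.cong[OF refl], rule base_change[OF c c' cb cb]) (use m in auto)
  also have "\<dots> = 0"
    using sum_mod_shift[OF m, of "\<lambda>k. tri_area c c' (ps ! k)"] by (simp add: sum_subtractf)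
  finally show ?thesis by simp
qed

lemma quad_zero:
  assumes G: "unitary_U G" and inv: "\<And>v. G *v (G *v v) = k *s v" and k: "k \<noteq> 0"
    and x: "cball_pt x" and y: "cball_pt y"
  shows "tri_area origin_pt x (G *v x) + tri_area origin_pt (G *v x) (G *v y)
       + tri_area origin_pt (G *v y) y + tri_area origin_pt y x = 0"
proof -
  define o' where "o' = G *v origin_pt"
  define gx where "gx = G *v x"
  define gy where "gy = G *v y"
  have o: "negative_pt origin_pt" by (rule origin_negative)
  have o': "negative_pt o'" using unitary_negative[OF G o] by (simp add: o'_def)
  have cgx: "cball_pt gx" and cgy: "cball_pt gy" using unitary_cball[OF G] x y by (auto simp: gx_def gy_def)
  have e1: "tri_area origin_pt x gx = tri_area o' gx x"
    using area_unitary[OF G, of origin_pt x gx] by (simp add: o'_def gx_def inv area_scale3 k)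
  have e2: "tri_area origin_pt gx gy = tri_area o' x y"
    using area_unitary[OF G, of origin_pt gx gy] by (simp add: o'_def gx_def gy_def inv area_scale2 area_scale3 k)
  have e3: "tri_area origin_pt gy y = tri_area o' y gy"
    using area_unitary[OF G, of origin_pt gy y] by (simp add: o'_def gy_def inv area_scale2 k)
  have e4: "tri_area origin_pt y x = tri_area o' gy gx"
    using area_unitary[OF G, of origin_pt y x] by (simp add: o'_def gx_def gy_def)
  have a1: "tri_area o' gx x = - tri_area o' x gx" by (rule area_antisym[OF o' x cgx])
  have a2: "tri_area o' x y = - tri_area o' y x" by (rule area_antisym[OF o' y x])
  have a3: "tri_area o' y gy = - tri_area o' gy y" by (rule area_antisym[OF o' cgy y])
  have a4: "tri_area o' gy gx = - tri_area o' gx gy" by (rule area_antisym[OF o' cgx cgy])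
  have b1: "tri_area o' x gx - tri_area origin_pt x gx = tri_area origin_pt o' x - tri_area origin_pt o' gx"
    by (rule base_change[OF o o' x cgx])
  have b2: "tri_area o' gx gy - tri_area origin_pt gx gy = tri_area origin_pt o' gx - tri_area origin_pt o' gy"
    by (rule base_change[OF o o' cgx cgy])
  have b3: "tri_area o' gy y - tri_area origin_pt gy y = tri_area origin_pt o' gy - tri_area origin_pt o' y"
    by (rule base_change[OF o o' cgy y])
  have b4: "tri_area o' y x - tri_area origin_pt y x = tri_area origin_pt o' y - tri_area origin_pt o' x"
    by (rule base_change[OF o o' y x])
  show ?thesis
    unfolding gx_def[symmetric] gy_def[symmetric]
    using e1 e2 e3 e4 a1 a2 a3 a4 b1 b2 b3 b4 by linarith
qed




lemma scal_mat_mv: "(\<chi> i j. c * (mat 1 :: cmat)$i$j) *v v = c *s v"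
  by (simp add: vec2_eq mv_comp mat_def)

lemma mv_smult: "(A::cmat) *v (l *s v) = l *s (A *v v)"
  by (simp add: vec2_eq mv_comp algebra_simps)

fun sq :: "(int \<Rightarrow> cmat) \<Rightarrow> int \<Rightarrow> cvec \<Rightarrow> nat \<Rightarrow> cvec" where
  "sq G s y 0 = y"
| "sq G s y (Suc j) = G (s + int (Suc j)) *v sq G s y j"

lemma sq_scale: "sq G s (l *s y) j = l *s sq G s y j"
  by (induction j) (simp_all add: mv_smult)

lemma chain_sq: "chain G i x j = sq G (i - 2) x j"
  by (induction j) simp_all

lemma orbit_sq: "orbit G p j = sq G 0 p j"
  by (induction j) simp_all

lemma sq_shift: "sq G (s + 1) (G (s + 1) *v y) j = sq G s y (Suc j)"
  by (induction j) (simp_all add: algebra_simps)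

definition Lsum :: "(int \<Rightarrow> cmat) \<Rightarrow> nat \<Rightarrow> int \<Rightarrow> cvec \<Rightarrow> real" where
  "Lsum G n s y = (\<Sum>j<n. tri_area origin_pt (sq G s y j) (sq G s y (Suc j)))"

locale hom =
  fixes n :: nat and G :: "int \<Rightarrow> cmat"
  assumes hom: "is_hom_H n G" and n3: "n \<ge> 3"
begin

lemma per: "G (i + int n) = G i" using hom by (simp add: is_hom_H_def)
lemma uni: "unitary_U (G i)" using hom by (simp add: is_hom_H_def)

lemma invol: "\<exists>k. k \<noteq> 0 \<and> (\<forall>v. G i *v (G i *v v) = k *s v)"
proof -
  have "pu_eq (mat 1) (G i ** G i)" using hom by (simp add: is_hom_H_def)
  then obtain c where c: "c \<noteq> 0" "G i ** G i = (\<chi> a b. c * (mat 1::cmat)$a$b)"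
    unfolding pu_eq_def by blast
  have "G i *v (G i *v v) = c *s v" for v
    by (simp add: matrix_vector_mul_assoc c(2) scal_mat_mv)
  then show ?thesis using c by blast
qed

lemma sq_unitary_cball: "cball_pt y \<Longrightarrow> cball_pt (sq G s y j)"
  by (induction j) (simp_all add: unitary_cball uni)
lemma sq_unitary_neg: "negative_pt y \<Longrightarrow> negative_pt (sq G s y j)"
  by (induction j) (simp_all add: unitary_negative uni)
lemma sq_unitary_iso: "isotropic_pt y \<Longrightarrow> isotropic_pt (sq G s y j)"
  by (induction j) (simp_all add: unitary_isotropic uni)

lemma sq_period: "sq G (s + int n) y j = sq G s y j"
proof (induction j)
  case (Suc j)
  have "G (s + int n + int (Suc j)) = G (s + int (Suc j))"
    using per[of "s + int (Suc j)"] by (simp add: algebra_simps)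
  then show ?case using Suc by simp
qed simp

lemma sq_period_k: "sq G (s + int n * int k) y j = sq G s y j"
proof (induction k arbitrary: s)
  case (Suc k)
  have "sq G (s + int n * int (Suc k)) y j = sq G ((s + int n * int k) + int n) y j"
    by (simp add: algebra_simps)
  also have "\<dots> = sq G s y j" using sq_period Suc by simp
  finally show ?case .
qed simp

lemma sq0: "sq G 0 y j = lprod G j *v y"
  by (induction j) (simp_all add: matrix_vector_mul_assoc)

lemma closing_nat: "\<exists>\<mu>. \<mu> \<noteq> 0 \<and> (\<forall>y. sq G (int m) y n = \<mu> *s y)"
proof (induction m)
  case 0
  obtain c where c: "c \<noteq> 0" "lprod G n = (\<chi> a b. c * (mat 1::cmat)$a$b)"
    using hom by (auto simp: is_hom_H_def pu_eq_def)
  show ?case using c by (intro exI[of _ c]) (simp add: sq0 scal_mat_mv)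
next
  case (Suc m)
  then obtain \<mu> where mu: "\<mu> \<noteq> 0" "\<And>y. sq G (int m) y n = \<mu> *s y" by blast
  obtain k where k: "k \<noteq> 0" "\<And>v. G (int m + 1) *v (G (int m + 1) *v v) = k *s v"
    using invol by blast
  have "sq G (int (Suc m)) y' n = \<mu> *s y'" for y'
  proof -
    define y where "y = (1 / k) *s (G (int m + 1) *v y')"
    have y': "y' = G (int m + 1) *v y" using k by (simp add: y_def mv_smult)
    have "sq G (int (Suc m)) y' n = sq G (int m + 1) (G (int m + 1) *v y) n" using y' by (simp add: add.commute)
    also have "\<dots> = sq G (int m) y (Suc n)" by (rule sq_shift)
    also have "\<dots> = G (int m + int (Suc n)) *v (\<mu> *s y)" using mu by simp
    also have "G (int m + int (Suc n)) = G (int m + 1)"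
      using per[of "int m + 1"] by (simp add: algebra_simps)
    finally show ?thesis using y' by (simp add: mv_smult)
  qed
  then show ?case using mu by blast
qed

lemma closing: "\<exists>\<mu>. \<mu> \<noteq> 0 \<and> (\<forall>y. sq G s y n = \<mu> *s y)"
proof -
  define k where "k = nat \<bar>s\<bar>"
  have k1: "int k \<ge> - s" by (simp add: k_def)
  have "int n * int k \<ge> 1 * int k" using n3 by (intro mult_right_mono) auto
  then have nn: "s + int n * int k \<ge> 0" using k1 by linarith
  define m where "m = nat (s + int n * int k)"
  have m: "s + int n * int k = int m" using nn by (simp add: m_def)
  obtain \<mu> where mu: "\<mu> \<noteq> 0" "\<forall>y. sq G (int m) y n = \<mu> *s y" using closing_nat by blast
  have "sq G s y n = \<mu> *s y" for y
    using sq_period_k[of s k y n] mu(2) m by simp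
  then show ?thesis using mu(1) by blast
qed

end



context hom begin

lemma Lsum_indep:
  assumes y: "cball_pt y" and y': "cball_pt y'"
  shows "Lsum G n s y = Lsum G n s y'"
proof -
  define q where "q = sq G s y"
  define q' where "q' = sq G s y'"
  define f where "f j = tri_area origin_pt (q j) (q' j)" for j
  have o: "negative_pt origin_pt" by (rule origin_negative)
  have cq: "cball_pt (q j)" "cball_pt (q' j)" for j
    using sq_unitary_cball y y' by (auto simp: q_def q'_def)
  have step: "tri_area origin_pt (q j) (q (Suc j)) - tri_area origin_pt (q' j) (q' (Suc j))
      = f j - f (Suc j)" for j
  proof -
    obtain k where k: "k \<noteq> 0" "\<And>v. G (s + int (Suc j)) *v (G (s + int (Suc j)) *v v) = k *s v"
      using invol by blast
    have qs: "q (Suc j) = G (s + int (Suc j)) *v q j" "q' (Suc j) = G (s + int (Suc j)) *v q' j"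
      by (simp_all add: q_def q'_def)
    have z: "tri_area origin_pt (q j) (q (Suc j)) + tri_area origin_pt (q (Suc j)) (q' (Suc j))
       + tri_area origin_pt (q' (Suc j)) (q' j) + tri_area origin_pt (q' j) (q j) = 0"
      unfolding qs by (rule quad_zero[OF uni k(2) k(1) cq(1) cq(2)])
    have a1: "tri_area origin_pt (q' (Suc j)) (q' j) = - tri_area origin_pt (q' j) (q' (Suc j))"
      by (rule area_antisym[OF o cq(2) cq(2)])
    have a2: "tri_area origin_pt (q' j) (q j) = - tri_area origin_pt (q j) (q' j)"
      by (rule area_antisym[OF o cq(1) cq(2)])
    show ?thesis using z a1 a2 by (simp add: f_def)
  qed
  obtain \<mu> where mu: "\<mu> \<noteq> 0" "\<And>v. sq G s v n = \<mu> *s v" using closing by blast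
  have fn: "f n = f 0"
    using mu by (simp add: f_def q_def q'_def area_scale2 area_scale3)
  have "Lsum G n s y - Lsum G n s y' = (\<Sum>j<n. f j - f (Suc j))"
    unfolding Lsum_def q_def[symmetric] q'_def[symmetric] sum_subtractf[symmetric]
    by (rule sum.cong[OF refl]) (rule step)
  also have "\<dots> = f 0 - f n" by (rule sum_lessThan_telescope')
  finally show ?thesis using fn by simp
qed

lemma Lsum_shift:
  assumes y: "cball_pt y"
  shows "Lsum G n (s + 1) (G (s + 1) *v y) = Lsum G n s y"
proof -
  define g where "g j = tri_area origin_pt (sq G s y j) (sq G s y (Suc j))" for j
  have "Lsum G n (s + 1) (G (s + 1) *v y) = (\<Sum>j<n. g (Suc j))"
    by (simp only: Lsum_def sq_shift g_def)
  also have "\<dots> = (\<Sum>j<Suc n. g j) - g 0" by (simp only: sum.lessThan_Suc_shift)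
  also have "\<dots> = (\<Sum>j<n. g j) + g n - g 0" by simp
  also have "g n = g 0"
  proof -
    obtain \<mu> where mu: "\<mu> \<noteq> 0" "\<And>v. sq G s v n = \<mu> *s v" using closing by blast
    have "G (s + int (Suc n)) = G (s + 1)" using per[of "s + 1"] by (simp add: algebra_simps)
    then have "sq G s y (Suc n) = \<mu> *s sq G s y 1" using mu by (simp add: mv_smult)
    then show ?thesis using mu by (simp add: g_def area_scale2 area_scale3)
  qed
  finally show ?thesis by (simp add: Lsum_def g_def)
qed

lemma Lsum_const_nat:
  assumes y: "cball_pt y"
  shows "Lsum G n (int m) y = Lsum G n 0 origin_pt"
  using y
proof (induction m arbitrary: y)
  case 0
  then show ?case using Lsum_indep[OF 0 neg_cball[OF origin_negative]] by simp
next
  case (Suc m)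
  have oc: "cball_pt origin_pt" by (rule neg_cball[OF origin_negative])
  have "Lsum G n (int (Suc m)) y = Lsum G n (int m + 1) (G (int m + 1) *v origin_pt)"
    using Lsum_indep[OF Suc.prems unitary_cball[OF uni oc]] by (simp add: add.commute)
  also have "\<dots> = Lsum G n (int m) origin_pt" by (rule Lsum_shift[OF oc])
  also have "\<dots> = Lsum G n 0 origin_pt" by (rule Suc.IH[OF oc])
  finally show ?case .
qed

lemma Lsum_const:
  assumes y: "cball_pt y"
  shows "Lsum G n s y = Lsum G n 0 origin_pt"
proof -
  define k where "k = nat \<bar>s\<bar>"
  have k1: "int k \<ge> - s" by (simp add: k_def)
  have "int n * int k \<ge> 1 * int k" using n3 by (intro mult_right_mono) auto
  then have nn: "s + int n * int k \<ge> 0" using k1 by linarith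
  define m where "m = nat (s + int n * int k)"
  have m: "s + int n * int k = int m" using nn by (simp add: m_def)
  have "Lsum G n s y = Lsum G n (int m) y"
    unfolding Lsum_def using sq_period_k[of s k y] m by metis
  also have "\<dots> = Lsum G n 0 origin_pt" by (rule Lsum_const_nat[OF y])
  finally show ?thesis .
qed

lemma area_rho_Lsum: "area_rho G n = Lsum G n 0 origin_pt"
proof -
  define q where "q = sq G 0 origin_pt"
  have oc: "cball_pt origin_pt" by (rule neg_cball[OF origin_negative])
  obtain \<mu> where mu: "\<mu> \<noteq> 0" "\<And>v. sq G 0 v n = \<mu> *s v" using closing by blast
  have qn1: "q (Suc n) = \<mu> *s q 1"
  proof -
    have "G (0 + int (Suc n)) = G 1" using per[of 1] by (simp add: algebra_simps)
    then show ?thesis using mu by (simp add: q_def mv_smult)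
  qed
  have len: "length (map (orbit G origin_pt) [1..<n+1]) = n" by simp
  have "area_rho G n = (\<Sum>k<n. tri_area origin_pt (q (Suc k)) (q (Suc (Suc k))))"
    unfolding area_rho_def poly_area_def len
  proof (rule sum.cong[OF refl])
    fix k assume k: "k \<in> {..<n}"
    have a: "map (orbit G origin_pt) [1..<n+1] ! k = q (Suc k)"
      using k by (simp add: orbit_sq q_def nth_map del: upt_Suc)
    show "tri_area origin_pt (map (orbit G origin_pt) [1..<n+1] ! k)
         (map (orbit G origin_pt) [1..<n+1] ! ((k + 1) mod n)) =
         tri_area origin_pt (q (Suc k)) (q (Suc (Suc k)))"
    proof (cases "Suc k < n")
      case True
      then have "map (orbit G origin_pt) [1..<n+1] ! ((k + 1) mod n) = q (Suc (Suc k))"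
        by (simp add: orbit_sq q_def nth_map del: upt_Suc)
      then show ?thesis using a by simp
    next
      case False
      then have kn: "Suc k = n" using k by simp
      then have "map (orbit G origin_pt) [1..<n+1] ! ((k + 1) mod n) = q 1"
        using n3 by (simp add: orbit_sq q_def nth_map del: upt_Suc)
      then show ?thesis using a kn qn1 mu by (simp add: area_scale3)
    qed
  qed
  also have "\<dots> = Lsum G n 1 (G 1 *v origin_pt)"
    by (simp add: Lsum_def q_def sq_shift[of G 0, simplified])
  also have "\<dots> = Lsum G n 0 origin_pt"
    using Lsum_shift[OF oc, of 0] by simp
  finally show ?thesis .
qed

end



context hom begin

lemma chain_reduce:
  assumes x: "cball_pt x" and fx: "fixes_pt (G i ** G (i - 1)) x"
  shows "Lsum G n (i - 2) x = poly_area origin_pt (map (sq G (i - 2) x) [2..<n])"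
proof -
  define q where "q = sq G (i - 2) x"
  obtain \<nu> where nu: "(G i ** G (i - 1)) *v x = \<nu> *s x" using fx by (auto simp: fixes_pt_def)
  have "\<nu> \<noteq> 0"
  proof
    assume "\<nu> = 0"
    then have "(G i ** G (i - 1)) *v x = 0" using nu by simp
    then have "x = 0" using unitary_inj[OF unitary_mult[OF uni uni]] by blast
    then show False using fx by (simp add: fixes_pt_def)
  qed
  have q1: "q 1 = G (i - 1) *v x" by (simp add: q_def)
  have q2: "q 2 = \<nu> *s x"
    using nu by (simp add: q_def numeral_2_eq_2 matrix_vector_mul_assoc[symmetric])
  obtain \<mu> where mu: "\<mu> \<noteq> 0" "\<And>v. sq G (i - 2) v n = \<mu> *s v" using closing by blast
  have qn: "q n = (\<mu> / \<nu>) *s q 2" using mu \<open>\<nu> \<noteq> 0\<close> q2 by (simp add: q_def)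
  have cq: "cball_pt (q j)" for j using sq_unitary_cball[OF x] by (simp add: q_def)
  define m where "m = n - 2"
  have m: "n = Suc (Suc m)" and m3: "m \<ge> 1" using n3 by (simp_all add: m_def)
  define g where "g j = tri_area origin_pt (q j) (q (Suc j))" for j
  have "Lsum G n (i - 2) x = (\<Sum>j<Suc (Suc m). g j)" unfolding Lsum_def g_def q_def m[symmetric] ..
  also have "\<dots> = g 0 + (g 1 + (\<Sum>j<m. g (Suc (Suc j))))"
    by (simp only: sum.lessThan_Suc_shift One_nat_def)
  finally have L: "Lsum G n (i - 2) x = g 0 + (g 1 + (\<Sum>j<m. g (Suc (Suc j))))" .
  have Z: "g 0 + g 1 = 0"
  proof -
    have "g 1 = tri_area origin_pt (q 1) x"
      using \<open>\<nu> \<noteq> 0\<close> by (simp add: g_def q2[unfolded numeral_2_eq_2] area_scale3)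
    also have "\<dots> = - tri_area origin_pt x (q 1)"
      by (rule area_antisym[OF origin_negative x cq])
    finally show ?thesis by (simp add: g_def q_def)
  qed
  have P: "poly_area origin_pt (map q [2..<n]) = (\<Sum>j<m. g (Suc (Suc j)))"
    unfolding poly_area_def
  proof -
    have len: "length (map q [2..<n]) = m" by (simp add: m_def)
    show "(\<Sum>k<length (map q [2..<n]). tri_area origin_pt (map q [2..<n] ! k)
            (map q [2..<n] ! ((k + 1) mod length (map q [2..<n])))) = (\<Sum>j<m. g (Suc (Suc j)))"
      unfolding len
    proof (rule sum.cong[OF refl])
      fix k assume k: "k \<in> {..<m}"
      have a: "map q [2..<n] ! k = q (Suc (Suc k))" using k by (simp add: m del: upt_Suc)
      show "tri_area origin_pt (map q [2..<n] ! k) (map q [2..<n] ! ((k + 1) mod m)) = g (Suc (Suc k))"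
      proof (cases "Suc k < m")
        case True
        then have "map q [2..<n] ! ((k + 1) mod m) = q (Suc (Suc (Suc k)))" by (simp add: m del: upt_Suc)
        then show ?thesis using a by (simp add: g_def)
      next
        case False
        then have km: "Suc k = m" using k by simp
        then have "map q [2..<n] ! ((k + 1) mod m) = q 2" by (simp add: m del: upt_Suc)
        moreover have "q (Suc (Suc (Suc k))) = (\<mu> / \<nu>) *s q 2" using qn km m by simp
        ultimately show ?thesis using a mu \<open>\<nu> \<noteq> 0\<close> by (simp add: g_def area_scale3)
      qed
    qed
  qed
  show ?thesis using L Z P unfolding q_def by linarith
qed

end



lemma neg_Re_le: "negative_pt p \<Longrightarrow> Re (herm p p) \<le> 0"
  by (simp add: negative_pt_def)

lemma neg_poly_bound:
  assumes m: "length ps \<ge> 3" and neg: "\<forall>p\<in>set ps. negative_pt p"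
  shows "poly_area (ps ! 0) ps < (real (length ps) - 2) * pi"
proof -
  define m where "m = length ps"
  define c where "c = ps ! 0"
  have m3: "m \<ge> 3" using m by (simp add: m_def)
  have negk: "negative_pt (ps ! k)" if "k < m" for k using neg that by (simp add: m_def)
  have c: "negative_pt c" using negk[of 0] m3 by (simp add: c_def)
  define a where "a k = tri_area c (ps ! k) (ps ! ((k + 1) mod m))" for k
  define b where "b k = pi - (if k = 0 then pi else 0) - (if k = m - 1 then pi else 0)" for k :: nat
  have le: "a k \<le> b k" if "k \<in> {..<m}" for k
  proof -
    have k: "k < m" using that by simp
    have bnd: "\<bar>a k\<bar> < pi"
      unfolding a_def
      by (rule negbase_Arg[OF c]) (use negk[of k] negk[of "(k+1) mod m"] k m3 in \<open>auto intro: neg_Re_le\<close>)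
    show ?thesis
    proof (cases "k = 0")
      case True
      then have "a k = 0" using m3 area_degen1[OF c] by (simp add: a_def c_def)
      then show ?thesis using True m3 by (simp add: b_def)
    next
      case False
      show ?thesis
      proof (cases "k = m - 1")
        case True
        then have "(k + 1) mod m = 0" using m3 by simp
        then have "a k = 0" using area_degen2[OF c] by (simp add: a_def c_def)
        then show ?thesis using True False by (simp add: b_def)
      next
        case False2: False
        then show ?thesis using False bnd by (simp add: b_def)
      qed
    qed
  qed
  have lt: "a 1 < b 1"
  proof -
    have "\<bar>a 1\<bar> < pi"
      unfolding a_def
      by (rule negbase_Arg[OF c]) (use negk[of 1] negk[of "Suc (Suc 0)"] m3 in \<open>auto intro: neg_Re_le\<close>)
    moreover have "Suc 0 \<noteq> m - Suc 0" using m3 by simp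
    ultimately show ?thesis by (simp add: b_def)
  qed
  have "(\<Sum>k<m. a k) < (\<Sum>k<m. b k)"
    by (rule sum_strict_mono_ex1) (use le lt m3 in auto)
  also have "(\<Sum>k<m. b k) = (real m - 2) * pi"
  proof -
    have "(\<Sum>k<m. b k) = (\<Sum>k<m. pi) - (\<Sum>k<m. (if k = 0 then pi else 0)) - (\<Sum>k<m. (if k = m - 1 then pi else 0))"
      by (simp add: b_def sum_subtractf)
    also have "\<dots> = real m * pi - pi - pi" using m3 by (simp add: sum.delta)
    finally show ?thesis by (simp add: algebra_simps)
  qed
  finally show ?thesis by (simp add: poly_area_def a_def m_def c_def)
qed

context hom begin

lemma no_neg_fixed:
  assumes n5: "n \<ge> 5" and area: "area_rho G n = (real n - 4) * pi"
    and x: "negative_pt x" and fx: "fixes_pt (G i ** G (i - 1)) x"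
  shows False
proof -
  define ps where "ps = map (sq G (i - 2) x) [2..<n]"
  have xc: "cball_pt x" using x by (rule neg_cball)
  have len: "length ps = n - 2" by (simp add: ps_def)
  have negs: "\<forall>p\<in>set ps. negative_pt p" using sq_unitary_neg[OF x] by (auto simp: ps_def)
  have p0: "ps ! 0 = sq G (i - 2) x 2" using n3 by (simp add: ps_def del: upt_Suc)
  have "area_rho G n = Lsum G n (i - 2) x" using Lsum_const[OF xc] area_rho_Lsum by simp
  also have "\<dots> = poly_area origin_pt ps" unfolding ps_def by (rule chain_reduce[OF xc fx])
  also have "\<dots> = poly_area (ps ! 0) ps"
    by (rule poly_base_change[OF origin_negative]) (use negs p0 sq_unitary_neg[OF x] neg_cball in auto)
  also have "\<dots> < (real (length ps) - 2) * pi" by (rule neg_poly_bound) (use len n5 negs in auto)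
  also have "\<dots> = (real n - 4) * pi" using len n3 by (simp add: of_nat_diff)
  finally show False using area by simp
qed

end



lemma one_minus_cis:
  assumes "0 \<le> \<phi>" "\<phi> < 2 * pi"
  shows "2 * Arg (1 - cis (- \<phi>)) = (if \<phi> = 0 then 0 else pi - \<phi>)"
proof (cases "\<phi> = 0")
  case True then show ?thesis by (simp add: Arg_zero)
next
  case False
  define t where "t = \<phi> / 2"
  have ph: "\<phi> = 2 * t" by (simp add: t_def)
  have t: "0 < t" "t < pi" using assms False by (auto simp: t_def)
  have st: "sin t > 0" using t by (simp add: sin_gt_zero)
  have cs: "cos (pi / 2 - t) = sin t" "sin (pi / 2 - t) = cos t" by (simp_all add: cos_diff sin_diff)
  have "1 - cis (- \<phi>) = rcis (2 * sin t) (pi / 2 - t)"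
    unfolding ph by (simp add: complex_eq_iff rcis_def cs cos_double_sin sin_double power2_eq_square)
  moreover have "pi / 2 - t \<in> {-pi<..pi}" using t by auto
  ultimately have "Arg (1 - cis (- \<phi>)) = pi / 2 - t" using st by (simp add: Arg_rcis)
  then show ?thesis using False by (simp add: t_def)
qed

lemma cis_sum: "cis (\<Sum>k<(N::nat). f k) = (\<Prod>k<N. cis (f k))"
  by (induction N) (simp_all add: cis_mult[symmetric])

lemma prod_mod_shift:
  assumes "m > 0" shows "(\<Prod>k<m. f (Suc k mod m)) = (\<Prod>k<m. (f k :: complex))"
proof -
  obtain m' where m: "m = Suc m'" using assms by (cases m) auto
  have "(\<Prod>k<Suc m'. f (Suc k mod Suc m')) = (\<Prod>k<m'. f (Suc k mod Suc m')) * f 0"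
    by (simp add: prod.lessThan_Suc)
  also have "(\<Prod>k<m'. f (Suc k mod Suc m')) = (\<Prod>k<m'. f (Suc k))"
    by (rule prod.cong) auto
  also have "(\<Prod>k<m'. f (Suc k)) * f 0 = (\<Prod>k<Suc m'. f k)"
    by (simp only: prod.lessThan_Suc_shift mult.commute)
  finally show ?thesis using m by simp
qed

lemma ideal_poly:
  fixes u :: "nat \<Rightarrow> complex"
  assumes m3: "m \<ge> 3" and u1: "\<And>k. k < m \<Longrightarrow> cmod (u k) = 1"
    and S: "(\<Sum>k<m. 2 * Arg (1 - u k * cnj (u (Suc k mod m)))) = (real m - 2) * pi"
  shows "ccw_list (map u [0..<m]) \<and> (\<forall>j k. j < m \<and> k < m \<and> j \<noteq> k \<longrightarrow> u j \<noteq> u k)"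
proof -
  have m0: "m > 0" using m3 by simp
  define w where "w k = u (Suc k mod m) * cnj (u k)" for k
  define \<phi> where "\<phi> k = (if Arg (w k) \<ge> 0 then Arg (w k) else Arg (w k) + 2 * pi)" for k
  have ucnj: "u k * cnj (u k) = 1" if "k < m" for k
    using u1[OF that] by (simp add: complex_norm_square[symmetric])
  have w1: "cmod (w k) = 1" if "k < m" for k
    using u1[OF that] u1[of "Suc k mod m"] m0 by (simp add: w_def norm_mult)
  have phb: "0 \<le> \<phi> k" "\<phi> k < 2 * pi" for k
    using Arg_bounded[of "w k"] by (auto simp: \<phi>_def)
  have cisw: "cis (\<phi> k) = w k" if "k < m" for k
  proof -
    have "w k \<noteq> 0" using w1[OF that] by auto
    then have "cis (Arg (w k)) = w k" using w1[OF that] cis_Arg[of "w k"] by (auto simp: sgn_div_norm)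
    then show ?thesis by (simp add: \<phi>_def cis_mult[symmetric])
  qed
  have unext: "u (Suc k mod m) = u k * cis (\<phi> k)" if "k < m" for k
    using cisw[OF that] ucnj[OF that] by (simp add: w_def)
  have trm: "2 * Arg (1 - u k * cnj (u (Suc k mod m))) = pi - \<phi> k - (if \<phi> k = 0 then pi else 0)"
    if "k < m" for k
  proof -
    have "u k * cnj (u (Suc k mod m)) = cnj (w k)" by (simp add: w_def mult.commute)
    also have "\<dots> = cis (- \<phi> k)" using cisw[OF that] by (simp add: cis_cnj[symmetric])
    finally show ?thesis using one_minus_cis[OF phb] by simp
  qed
  have "cis (\<Sum>k<m. \<phi> k) = (\<Prod>k<m. w k)" by (simp add: cis_sum cisw)
  also have "\<dots> = (\<Prod>k<m. u (Suc k mod m)) * (\<Prod>k<m. cnj (u k))" by (simp add: w_def prod.distrib)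
  also have "\<dots> = (\<Prod>k<m. u k * cnj (u k))" by (simp add: prod_mod_shift[OF m0] prod.distrib)
  also have "\<dots> = 1" by (simp add: ucnj)
  finally have "cis (\<Sum>k<m. \<phi> k) = 1" .
  then have "Re (cis (\<Sum>k<m. \<phi> k)) = 1" by simp
  then have "cos (\<Sum>k<m. \<phi> k) = 1" by simp
  then obtain W :: int where W: "(\<Sum>k<m. \<phi> k) = W * 2 * pi" by (auto simp: cos_one_2pi_int)
  define Z where "Z = card {k \<in> {..<m}. \<phi> k = 0}"
  have Zsum: "(\<Sum>k<m. (if \<phi> k = 0 then pi else 0)) = real Z * pi"
    by (simp add: Z_def sum.inter_filter[symmetric])
  have "(real m - 2) * pi = (\<Sum>k<m. pi - \<phi> k - (if \<phi> k = 0 then pi else 0))"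
    using S trm by simp
  also have "\<dots> = real m * pi - W * 2 * pi - real Z * pi"
    by (simp add: sum_subtractf W Zsum)
  finally have E: "(real m - 2) * pi = real m * pi - W * 2 * pi - real Z * pi" .
  have "(2 - W * 2 - real Z) * pi = 0" using E by (simp add: algebra_simps)
  then have eq: "2 - W * 2 - real Z = 0" using pi_gt_zero by simp
  then have eqi: "2 * W + int Z = 2" by linarith
  have nonneg: "(\<Sum>k<m. \<phi> k) \<ge> 0" by (rule sum_nonneg) (use phb in auto)
  then have "real_of_int W * (2 * pi) \<ge> 0" using W by (simp add: mult.assoc)
  then have "real_of_int W \<ge> 0" using pi_gt_zero by (simp add: zero_le_mult_iff)
  then have W0: "W \<ge> 0" by simp
  have W1: "W = 1"
  proof (rule ccontr)
    assume "W \<noteq> 1"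
    then have "W = 0" using eqi W0 by linarith
    then have "(\<Sum>k<m. \<phi> k) = 0" using W by simp
    then have "\<forall>k\<in>{..<m}. \<phi> k = 0" using sum_nonneg_eq_0_iff[of "{..<m}" \<phi>] phb by simp
    then have "{k \<in> {..<m}. \<phi> k = 0} = {..<m}" by auto
    then have "Z = m" by (simp add: Z_def)
    then show False using eqi \<open>W = 0\<close> m3 by linarith
  qed
  then have "Z = 0" using eqi by linarith
  then have phpos: "\<phi> k > 0" if "k < m" for k
    using that phb[of k] by (auto simp: Z_def)
  have tot: "(\<Sum>k<m. \<phi> k) = 2 * pi" using W W1 by simp
  define \<theta> where "\<theta> j = Arg (u 0) + (\<Sum>k<j. \<phi> k)" for j
  have u_th: "u j = cis (\<theta> j)" if "j < m" for j
    using that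
  proof (induction j)
    case 0
    have "u 0 \<noteq> 0" using u1[OF 0] by auto
    then have "cis (Arg (u 0)) = u 0" using u1[OF 0] cis_Arg[of "u 0"] by (auto simp: sgn_div_norm)
    then show ?case by (simp add: \<theta>_def)
  next
    case (Suc j)
    then have "u (Suc j) = u (Suc j mod m)" by simp
    also have "\<dots> = u j * cis (\<phi> j)" using unext[of j] Suc.prems by simp
    also have "\<dots> = cis (\<theta> (Suc j))" using Suc by (simp add: \<theta>_def cis_mult add.assoc)
    finally show ?case .
  qed
  have th_diff: "\<theta> k - \<theta> j \<ge> \<phi> j" if "j < k" for j k
  proof -
    have "(\<Sum>l<Suc j. \<phi> l) \<le> (\<Sum>l<k. \<phi> l)"
      by (rule sum_mono2) (use that phb in auto)
    then show ?thesis by (simp add: \<theta>_def)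
  qed
  have th_up: "\<theta> k - \<theta> j < 2 * pi" if "j < k" "k < m" for j k
  proof -
    have "(\<Sum>l<k. \<phi> l) \<le> (\<Sum>l<m - 1. \<phi> l)"
      by (rule sum_mono2) (use that phb in auto)
    moreover have "(\<Sum>l<m. \<phi> l) = (\<Sum>l<m - 1. \<phi> l) + \<phi> (m - 1)"
      using sum.lessThan_Suc[of \<phi> "m - 1"] m0 by simp
    moreover have "(\<Sum>l<j. \<phi> l) \<ge> 0" by (rule sum_nonneg) (use phb in auto)
    ultimately show ?thesis using tot phpos[of "m - 1"] m0 by (simp add: \<theta>_def)
  qed
  have ccw: "ccw_list (map u [0..<m])"
    unfolding ccw_list_def
  proof (intro exI[of _ \<theta>] conjI allI impI)
    fix j assume "Suc j < length (map u [0..<m])"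
    then show "\<theta> j < \<theta> (Suc j)" using th_diff[of j "Suc j"] phpos[of j] by simp
  next
    show "\<theta> (length (map u [0..<m]) - 1) < \<theta> 0 + 2 * pi"
      using th_up[of 0 "m - 1"] m3 by simp
  next
    fix j assume "j < length (map u [0..<m])"
    then show "map u [0..<m] ! j = cis (\<theta> j)" using u_th by simp
  qed
  have dist: "u j \<noteq> u k" if "j < m" "k < m" "j \<noteq> k" for j k
  proof
    assume e: "u j = u k"
    have gen: False if "a < b" "b < m" "u a = u b" for a b
    proof -
      have "cis (\<theta> b - \<theta> a) = 1" using u_th that by (simp add: cis_divide[symmetric])
      then have "Re (cis (\<theta> b - \<theta> a)) = 1" by simp
      then have "cos (\<theta> b - \<theta> a) = 1" by simp
      then obtain N :: int where N: "\<theta> b - \<theta> a = N * 2 * pi" by (auto simp: cos_one_2pi_int)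
      have "0 < \<theta> b - \<theta> a" using th_diff[OF that(1)] phpos[of a] that by simp
      moreover have "\<theta> b - \<theta> a < 2 * pi" using th_up that by simp
      ultimately have "0 < real_of_int N * (2 * pi)" "real_of_int N * (2 * pi) < 1 * (2 * pi)"
        using N by (simp_all add: mult.assoc)
      then have "0 < real_of_int N" "real_of_int N < 1" using pi_gt_zero
        by (simp add: zero_less_mult_iff, meson mult_less_cancel_right_pos zero_less_mult_iff zero_less_numeral)
      then have "0 < N" "N < 1" by simp_all
      then show False by linarith
    qed
    show False
    proof (cases "j < k")
      case True then show False using gen[of j k] e that by simp
    next
      case False then have "k < j" using that by simp
      then show False using gen[of k j] e that by simp
    qed
  qed
  show ?thesis using ccw dist by blast
qed




definition perp :: "cvec \<Rightarrow> cvec" where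
  "perp v = vector [cnj (v$2), cnj (v$1)]"

lemma perp_comp[simp]: "perp v $ 1 = cnj (v$2)" "perp v $ 2 = cnj (v$1)"
  by (simp_all add: perp_def)

lemma perp_perp[simp]: "perp (perp v) = v" by (simp add: vec2_eq)
lemma perp_nz: "v \<noteq> 0 \<Longrightarrow> perp v \<noteq> 0" by (auto simp: nonzero_vec)
lemma herm_perp_self: "herm (perp v) (perp v) = - herm v v" by (simp add: herm_def)
lemma herm_perp_orth: "herm (perp v) v = 0" "herm v (perp v) = 0" by (simp_all add: herm_def mult.commute)
lemma perp_smult: "perp (c *s v) = cnj c *s perp v" by (simp add: vec2_eq)

lemma orth_perp:
  assumes "herm u v = 0" "v \<noteq> 0"
  shows "\<exists>t. u = t *s perp v"
proof (cases "v$2 = 0")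
  case True
  then have v1: "v$1 \<noteq> 0" using assms(2) by (simp add: nonzero_vec)
  have "u$1 * cnj (v$1) = 0" using assms(1) True by (simp add: herm_def)
  then have "u$1 = 0" using v1 by simp
  then show ?thesis using True v1 by (intro exI[of _ "u$2 / cnj (v$1)"]) (simp add: vec2_eq)
next
  case False
  have e: "u$1 * cnj (v$1) = u$2 * cnj (v$2)" using assms(1) by (simp add: herm_def)
  show ?thesis
    using False e by (intro exI[of _ "u$1 / cnj (v$2)"]) (simp add: vec2_eq field_simps)
qed

lemma parseval:
  "herm q q *s x = herm x q *s q - herm x (perp q) *s perp q"
  by (simp add: vec2_eq herm_def algebra_simps)

lemma eigen_exists: "\<exists>v. fixes_pt (M::cmat) v"
proof (cases "M$1$2 = 0")
  case True
  have "M *v vector [0, 1] = (M$2$2) *s vector [0, 1]"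
    using True by (simp add: vec2_eq mv_comp)
  then show ?thesis unfolding fixes_pt_def by (intro exI[of _ "vector [0,1]"]) (auto simp: nonzero_vec)
next
  case False
  define a where "a = M$1$1"
  define b where "b = M$1$2"
  define c where "c = M$2$1"
  define d where "d = M$2$2"
  define s where "s = csqrt ((a - d)^2 + 4 * b * c)"
  have s2: "s^2 = (a - d)^2 + 4 * b * c" by (simp add: s_def)
  define l where "l = (a + d + s) / 2"
  have ch: "c * b + d * (l - a) = l * (l - a)"
  proof -
    have "c * b + d * (l - a) - l * (l - a) = ((a - d)^2 + 4 * b * c - s^2) / 4"
      by (simp add: l_def field_simps power2_eq_square)
    also have "\<dots> = 0" using s2 by simp
    finally show ?thesis by simp
  qed
  have "M *v vector [b, l - a] = l *s vector [b, l - a]"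
    using ch by (simp add: vec2_eq mv_comp a_def b_def c_def d_def algebra_simps)
  moreover have "vector [b, l - a] \<noteq> (0::cvec)" using False by (simp add: nonzero_vec b_def)
  ultimately show ?thesis by (auto simp: fixes_pt_def)
qed

lemma herm_mv_left_eig:
  assumes "M *v v = l *s v" shows "herm x (M *v v) = cnj l * herm x v"
  using assms by (simp add: herm_smult_right)

lemma pos_eigen_gives_neg:
  assumes U: "unitary_U M" and fv: "fixes_pt M v" and pos: "Re (herm v v) > 0"
  shows "\<exists>w. negative_pt w \<and> fixes_pt M w"
proof -
  obtain l where l: "M *v v = l *s v" and v0: "v \<noteq> 0" using fv by (auto simp: fixes_pt_def)
  have "l \<noteq> 0"
  proof
    assume "l = 0" then have "M *v v = 0" using l by simp
    then show False using unitary_inj[OF U] v0 by blast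
  qed
  define w where "w = perp v"
  have wneg: "negative_pt w" using pos v0 by (simp add: negative_pt_def w_def herm_perp_self perp_nz)
  have "herm (M *v w) (M *v v) = 0" using unitary_herm[OF U] by (simp add: w_def herm_perp_orth)
  then have "cnj l * herm (M *v w) v = 0" using l by (simp add: herm_smult_right)
  then have "herm (M *v w) v = 0" using \<open>l \<noteq> 0\<close> by simp
  then obtain t where "M *v w = t *s perp v" using orth_perp v0 by blast
  then have "fixes_pt M w" using wneg by (auto simp: fixes_pt_def w_def negative_pt_def)
  then show ?thesis using wneg by blast
qed

lemma herm_neg_right[simp]: "herm v (- w) = - herm v w" by (simp add: herm_def)
lemma herm_neg_left[simp]: "herm (- v) w = - herm v w" by (simp add: herm_def)

lemma mv_diff: "(A::cmat) *v (x - y) = A *v x - A *v y"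
  by (simp add: vec2_eq mv_comp algebra_simps)
lemma mv_add: "(A::cmat) *v (x + y) = A *v x + A *v y"
  by (simp add: vec2_eq mv_comp algebra_simps)

definition is_scalar :: "cmat \<Rightarrow> bool" where
  "is_scalar M \<longleftrightarrow> (\<exists>c. \<forall>v. M *v v = c *s v)"

lemma iso_perp_prop:
  assumes "herm v v = 0" "v \<noteq> 0"
  shows "\<exists>s. perp v = s *s v"
proof (cases "v$2 = 0")
  case True
  then have "v$1 = 0" using assms(1) by (simp add: herm_def)
  then show ?thesis using True assms(2) by (simp add: nonzero_vec)
next
  case False
  have e: "v$1 * cnj (v$1) = v$2 * cnj (v$2)" using assms(1) by (simp add: herm_def)
  show ?thesis using False e
    by (intro exI[of _ "cnj (v$1) / v$2"]) (simp add: vec2_eq field_simps mult.commute)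
qed

lemma inv_struct:
  assumes U: "unitary_U G" and inv: "\<And>v. G *v (G *v v) = k *s v" and k: "k \<noteq> 0"
    and ns: "\<not> is_scalar G"
  shows "\<exists>q l. negative_pt q \<and> l \<noteq> 0 \<and> G *v q = l *s q \<and> G *v perp q = (- l) *s perp q"
proof -
  obtain v l where l: "G *v v = l *s v" and v0: "v \<noteq> 0"
    using eigen_exists[of G] by (auto simp: fixes_pt_def)
  have l0: "l \<noteq> 0"
  proof
    assume "l = 0" then have "G *v v = 0" using l by simp
    then show False using unitary_inj[OF U] v0 by blast
  qed
  obtain y where y: "G *v y - l *s y \<noteq> 0"
    using ns unfolding is_scalar_def by (metis eq_iff_diff_eq_0)
  define u where "u = G *v y - l *s y"
  have ll: "l * l = k"
  proof -
    have "G *v (G *v v) = (l * l) *s v" using l by (simp add: mv_smult)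
    then have "(l * l) *s v = k *s v" using inv[of v] by metis
    then show ?thesis using v0 by (simp only: vector_mul_rcancel) blast
  qed
  have Gu: "G *v u = (- l) *s u"
  proof -
    have "G *v u = G *v (G *v y) - l *s (G *v y)"
      by (simp add: u_def mv_diff mv_smult)
    also have "\<dots> = (- l) *s u" using inv ll by (simp add: u_def algebra_simps)
    finally show ?thesis .
  qed
  have u0: "u \<noteq> 0" using y by (simp add: u_def)
  have "herm (G *v v) (G *v u) = herm v u" by (rule unitary_herm[OF U])
  then have "(l * cnj (- l)) * herm v u = herm v u" using l Gu
    by (simp add: herm_smult_left herm_smult_right mult_ac)
  then have "(1 + l * cnj l) * herm v u = 0" by (simp add: algebra_simps) (metis add.inverse_inverse add.right_inverse)
  moreover have "1 + l * cnj l \<noteq> 0"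
  proof -
    have "Re (1 + l * cnj l) > 0" by (simp add: complex_mult_cnj add_pos_nonneg)
    then show ?thesis by (metis zero_complex.sel(1) less_irrefl)
  qed
  ultimately have vu: "herm u v = 0" by (metis herm_cnj complex_cnj_zero mult_eq_0_iff)
  obtain t where t: "u = t *s perp v" using orth_perp[OF vu v0] by blast
  have t0: "t \<noteq> 0" using t u0 by auto
  have Gp: "G *v perp v = (- l) *s perp v"
  proof -
    have "t *s (G *v perp v) = t *s ((- l) *s perp v)"
      using Gu t by (simp add: mv_smult algebra_simps)
    then show ?thesis using t0 by (metis vector_mul_lcancel)
  qed
  have "Re (herm v v) \<noteq> 0"
  proof
    assume "Re (herm v v) = 0"
    then have hv: "herm v v = 0" using herm_self_real[of v] by (simp add: complex_eq_iff)
    obtain s where s: "perp v = s *s v" using iso_perp_prop[OF hv v0] by blast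
    have "G *v perp v = (s * l) *s v" using s l by (simp add: mv_smult)
    moreover have "G *v perp v = (- l * s) *s v" using Gp s by simp
    ultimately have "(2 * l * s) *s v = 0" by (simp add: algebra_simps vec2_eq)
    then have "s = 0" using v0 l0 by simp
    then show False using s perp_nz[OF v0] by simp
  qed
  then consider "Re (herm v v) < 0" | "Re (herm v v) > 0" by linarith
  then show ?thesis
  proof cases
    case 1
    then show ?thesis using l l0 Gp v0 by (intro exI[of _ v] exI[of _ l]) (simp add: negative_pt_def)
  next
    case 2
    have "negative_pt (perp v)" using 2 v0 by (simp add: negative_pt_def herm_perp_self perp_nz)
    then show ?thesis using l l0 Gp by (intro exI[of _ "perp v"] exI[of _ "- l"]) simp
  qed
qed




lemma refl_apply:
  assumes h: "herm q q \<noteq> 0"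
  shows "refl_mat q *v x = (2 * herm x q / herm q q) *s q - x"
  by (simp add: vec2_eq mv_comp refl_mat_def sgnJ_def herm_def[of x q] diff_divide_distrib
      add_divide_distrib algebra_simps)

lemma scal_mv: "(\<chi> i j. c * (G::cmat)$i$j) *v x = c *s (G *v x)"
  by (simp add: vec2_eq mv_comp algebra_simps)

lemma pu_refl:
  assumes q: "negative_pt q" and l: "l \<noteq> 0" and Gq: "G *v q = l *s q"
    and Gp: "G *v perp q = (- l) *s perp q"
  shows "pu_eq G (refl_mat q)"
proof -
  define h where "h = herm q q"
  define p where "p = perp q"
  have h: "h \<noteq> 0" using q by (auto simp: h_def negative_pt_def)
  have "refl_mat q *v x = (1 / l) *s (G *v x)" for x
  proof -
    define a where "a = herm x q"
    define b where "b = herm x p"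
    have P: "x = (a / h) *s q - (b / h) *s p"
      using parseval[of q x] h by (simp add: vec2_eq a_def b_def h_def p_def field_simps)
    have Gx: "G *v x = (l * a / h) *s q + (l * b / h) *s p"
      by (subst P) (simp add: mv_diff mv_smult Gq Gp[folded p_def] vec2_eq field_simps)
    have R: "refl_mat q *v x = (2 * a / h) *s q - x"
      using refl_apply[of q x] h by (simp add: a_def h_def)
    show ?thesis
      unfolding R Gx by (subst P) (use l h in \<open>simp add: vec2_eq field_simps\<close>)
  qed
  then have "refl_mat q *v x = (\<chi> i j. (1 / l) * G$i$j) *v x" for x by (simp only: scal_mv)
  then have "refl_mat q = (\<chi> i j. (1 / l) * G$i$j)"
    by (subst matrix_eq) blast
  then show ?thesis unfolding pu_eq_def using l by (intro exI[of _ "1 / l"] conjI) simp_all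
qed

lemma inv_neg_eigen:
  assumes U: "unitary_U G" and inv: "\<And>v. G *v (G *v v) = k *s v" and k: "k \<noteq> 0"
  shows "\<exists>q l. negative_pt q \<and> G *v q = l *s q"
proof (cases "is_scalar G")
  case True
  then obtain c where "\<And>v. G *v v = c *s v" by (auto simp: is_scalar_def)
  then show ?thesis using origin_negative by blast
next
  case False
  then show ?thesis using inv_struct[OF U inv k] by blast
qed

lemma inv_iso_not_eigen:
  assumes U: "unitary_U G" and q: "negative_pt q" and l: "l \<noteq> 0" and Gq: "G *v q = l *s q"
    and Gp: "G *v perp q = (- l) *s perp q"
    and x: "isotropic_pt x" and Gx: "G *v x = nu *s x"
  shows False
proof -
  have xc: "cball_pt x" using x by (simp add: cball_pt_def)
  have x0: "x \<noteq> 0" using x by (simp add: isotropic_pt_def)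
  have hq: "herm x q \<noteq> 0" using neg_herm_nz[OF q xc] herm_nz_sym by blast
  have hp: "herm x (perp q) \<noteq> 0"
  proof
    assume "herm x (perp q) = 0"
    then obtain t where t: "x = t *s q" using orth_perp[of x "perp q"] perp_nz q
      by (auto simp: negative_pt_def)
    then have "t \<noteq> 0" using x0 by auto
    then have "negative_pt x" using t smult_negative q by simp
    then show False using x by (simp add: negative_pt_def isotropic_pt_def)
  qed
  have "herm (G *v x) (G *v q) = herm x q" by (rule unitary_herm[OF U])
  then have e1: "nu * cnj l * herm x q = herm x q" using Gx Gq by (simp add: herm_smult_left herm_smult_right mult_ac)
  have "herm (G *v x) (G *v perp q) = herm x (perp q)" by (rule unitary_herm[OF U])
  then have e2: "- (nu * cnj l) * herm x (perp q) = herm x (perp q)" using Gx Gp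
    by (simp add: herm_smult_left herm_smult_right mult_ac)
  from e1 hq have "nu * cnj l = 1" by (metis mult_cancel_right2)
  with e2 hp show False by simp
qed

lemma indep_decomp:
  fixes x y z :: cvec
  assumes D: "x$1 * y$2 - x$2 * y$1 \<noteq> 0"
  shows "z = ((z$1 * y$2 - z$2 * y$1) / (x$1 * y$2 - x$2 * y$1)) *s x
           + ((x$1 * z$2 - x$2 * z$1) / (x$1 * y$2 - x$2 * y$1)) *s y"
proof -
  define D where "D = x$1 * y$2 - x$2 * y$1"
  have D0: "D \<noteq> 0" using D by (simp add: D_def)
  have n1: "(z$1 * y$2 - z$2 * y$1) * x$1 + (x$1 * z$2 - x$2 * z$1) * y$1 = z$1 * D"
    by (simp add: D_def algebra_simps)
  have n2: "(z$1 * y$2 - z$2 * y$1) * x$2 + (x$1 * z$2 - x$2 * z$1) * y$2 = z$2 * D"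
    by (simp add: D_def algebra_simps)
  have c1: "((z$1 * y$2 - z$2 * y$1) / D) * x$1 + ((x$1 * z$2 - x$2 * z$1) / D) * y$1 = z$1"
    using n1 D0 by (simp add: add_divide_distrib[symmetric])
  have c2: "((z$1 * y$2 - z$2 * y$1) / D) * x$2 + ((x$1 * z$2 - x$2 * z$1) / D) * y$2 = z$2"
    using n2 D0 by (simp add: add_divide_distrib[symmetric])
  show ?thesis using c1 c2 by (simp add: vec2_eq D_def)
qed

lemma indep_unique:
  fixes x y :: cvec
  assumes D: "x$1 * y$2 - x$2 * y$1 \<noteq> 0" and e: "a *s x + b *s y = 0"
  shows "a = 0 \<and> b = 0"
proof -
  have e1: "a * x$1 + b * y$1 = 0" "a * x$2 + b * y$2 = 0" using e by (simp_all add: vec2_eq)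
  have "a * (x$1 * y$2 - x$2 * y$1) = y$2 * (a * x$1 + b * y$1) - y$1 * (a * x$2 + b * y$2)"
    by (simp add: algebra_simps)
  then have "a = 0" using e1 D by simp
  moreover have "b * (x$1 * y$2 - x$2 * y$1) = x$1 * (a * x$2 + b * y$2) - x$2 * (a * x$1 + b * y$1)"
    by (simp add: algebra_simps)
  then have "b = 0" using e1 D by simp
  ultimately show ?thesis by simp
qed

lemma not_proj_D:
  fixes x y :: cvec
  assumes "x \<noteq> 0" "y \<noteq> 0" "\<not> proj_eq x y"
  shows "x$1 * y$2 - x$2 * y$1 \<noteq> 0"
proof
  assume D: "x$1 * y$2 - x$2 * y$1 = 0"
  have "\<exists>c. c \<noteq> 0 \<and> y = c *s x"
  proof (cases "x$1 = 0")
    case True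
    then have x2: "x$2 \<noteq> 0" using assms(1) by (simp add: nonzero_vec)
    then have "y$1 = 0" using D True by simp
    then show ?thesis using True x2 assms(2)
      by (intro exI[of _ "y$2 / x$2"]) (auto simp: vec2_eq nonzero_vec)
  next
    case False
    have "y = (y$1 / x$1) *s x" using False D by (simp add: vec2_eq field_simps)
    moreover then have "y$1 / x$1 \<noteq> 0" using assms(2) by auto
    ultimately show ?thesis by blast
  qed
  then show False using assms by (simp add: proj_eq_def)
qed




lemma tri_origin:
  assumes a: "cball_pt a" and b: "cball_pt b"
  shows "tri_area origin_pt a b = 2 * Arg (1 - bdry_coord a * cnj (bdry_coord b))"
proof -
  have a2: "a$2 \<noteq> 0" and b2: "b$2 \<noteq> 0" using cball_props a b by auto
  have "TT origin_pt a b = of_real ((cmod (a$2))^2 * (cmod (b$2))^2) * (1 - bdry_coord a * cnj (bdry_coord b))"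
    unfolding of_real_mult complex_norm_square
    using a2 b2 by (simp add: TT_def herm_def origin_pt_def bdry_coord_def field_simps)
  moreover have "(cmod (a$2))^2 * (cmod (b$2))^2 > 0" using a2 b2 by simp
  ultimately show ?thesis by (simp only: tri_area_eq Arg_times_of_real)
qed

lemma iso_coord_norm: "isotropic_pt v \<Longrightarrow> cmod (bdry_coord v) = 1"
proof -
  assume v: "isotropic_pt v"
  then have c: "cball_pt v" by (simp add: cball_pt_def)
  have "Re (herm v v) = 0" using v by (simp add: isotropic_pt_def)
  then have "(cmod (v$1))^2 = (cmod (v$2))^2" by (simp add: herm_self)
  then have "cmod (v$1) = cmod (v$2)" by (simp add: power2_eq_iff_nonneg)
  then show ?thesis using cball_props[OF c] by (simp add: bdry_coord_def norm_divide)
qed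

lemma proj_coord: "proj_eq v w \<Longrightarrow> bdry_coord v = bdry_coord w"
  by (auto simp: proj_eq_def bdry_coord_def)

lemma ideal_positive:
  assumes len: "length ps \<ge> 3" and iso: "\<forall>p\<in>set ps. isotropic_pt p"
    and A: "poly_area origin_pt ps = (real (length ps) - 2) * pi"
  shows "positive_cycle ps"
proof -
  define m where "m = length ps"
  define u where "u k = bdry_coord (ps ! k)" for k
  have isok: "isotropic_pt (ps ! k)" if "k < m" for k using iso that by (simp add: m_def)
  have cb: "cball_pt (ps ! k)" if "k < m" for k using isok[OF that] by (simp add: cball_pt_def)
  have m0: "m > 0" using len unfolding m_def by linarith
  have S: "(\<Sum>k<m. 2 * Arg (1 - u k * cnj (u (Suc k mod m)))) = (real m - 2) * pi"
  proof -
    have "(\<Sum>k<m. 2 * Arg (1 - u k * cnj (u (Suc k mod m)))) = poly_area origin_pt ps"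
      unfolding poly_area_def m_def[symmetric]
      by (rule sum.cong[OF refl]) (use m0 cb in \<open>simp add: u_def tri_origin\<close>)
    then show ?thesis using A by (simp add: m_def)
  qed
  have r: "ccw_list (map u [0..<m]) \<and> (\<forall>j k. j < m \<and> k < m \<and> j \<noteq> k \<longrightarrow> u j \<noteq> u k)"
  proof -
    have m3: "m \<ge> 3" using len by (simp add: m_def)
    have un: "\<And>k. k < m \<Longrightarrow> cmod (u k) = 1" using isok iso_coord_norm by (simp add: u_def)
    show ?thesis by (rule ideal_poly[OF m3 un S])
  qed
  have mp: "map u [0..<m] = map bdry_coord ps"
    by (rule nth_equalityI) (simp_all add: u_def m_def)
  have d: "\<forall>j k. j < length ps \<and> k < length ps \<and> j \<noteq> k \<longrightarrow> \<not> proj_eq (ps ! j) (ps ! k)"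
    using r proj_coord unfolding u_def m_def by blast
  have c: "ccw_list (map bdry_coord ps)" using r mp by simp
  show ?thesis unfolding positive_cycle_def using len iso d c by blast
qed

locale hom5 = hom +
  assumes n5: "n \<ge> 5" and area: "area_rho G n = (real n - 4) * pi"
begin

lemma nofix: "negative_pt x \<Longrightarrow> fixes_pt (G i ** G (i - 1)) x \<Longrightarrow> False"
  using no_neg_fixed[OF n5 area] by blast

lemma nonscalar: "\<not> is_scalar (G i)"
proof
  assume "is_scalar (G i)"
  then obtain c where c: "\<And>v. G i *v v = c *s v" by (auto simp: is_scalar_def)
  obtain k where k: "k \<noteq> 0" "\<And>v. G (i - 1) *v (G (i - 1) *v v) = k *s v" using invol by blast
  obtain q l where q: "negative_pt q" "G (i - 1) *v q = l *s q"
    using inv_neg_eigen[OF uni k(2) k(1)] by blast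
  have "(G i ** G (i - 1)) *v q = (c * l) *s q"
    using q c by (simp add: matrix_vector_mul_assoc[symmetric])
  then have "fixes_pt (G i ** G (i - 1)) q" using q by (auto simp: fixes_pt_def negative_pt_def)
  then show False using nofix q by blast
qed

lemma struct: "\<exists>q l. negative_pt q \<and> l \<noteq> 0 \<and> G i *v q = l *s q \<and> G i *v perp q = (- l) *s perp q"
proof -
  obtain k where k: "k \<noteq> 0" "\<And>v. G i *v (G i *v v) = k *s v" using invol by blast
  show ?thesis by (rule inv_struct[OF uni k(2) k(1) nonscalar])
qed

definition qq :: "int \<Rightarrow> cvec" where
  "qq i = (SOME q. \<exists>l. negative_pt q \<and> l \<noteq> 0 \<and> G i *v q = l *s q \<and> G i *v perp q = (- l) *s perp q)"

lemma qq: "\<exists>l. negative_pt (qq i) \<and> l \<noteq> 0 \<and> G i *v qq i = l *s qq i \<and> G i *v perp (qq i) = (- l) *s perp (qq i)"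
  unfolding qq_def using struct[of i] by (rule someI_ex[where P = "\<lambda>q. \<exists>l. _ q l"])

lemma qq_neg: "negative_pt (qq i)" using qq by blast

lemma qq_pu: "pu_eq (G i) (refl_mat (qq i))"
  using qq[of i] pu_refl by blast

lemma qq_distinct: "\<not> proj_eq (qq (i - 1)) (qq i)"
proof
  assume "proj_eq (qq (i - 1)) (qq i)"
  then obtain c where c: "c \<noteq> 0" "qq i = c *s qq (i - 1)" by (auto simp: proj_eq_def)
  obtain l' where l': "G (i - 1) *v qq (i - 1) = l' *s qq (i - 1)" using qq by blast
  obtain l where l: "G i *v qq i = l *s qq i" using qq by blast
  have "G (i - 1) *v qq i = l' *s qq i" using c l' by (simp add: mv_smult)
  then have "(G i ** G (i - 1)) *v qq i = (l * l') *s qq i"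
    using l by (simp add: matrix_vector_mul_assoc[symmetric] mv_smult)
  then have "fixes_pt (G i ** G (i - 1)) (qq i)" using qq_neg by (auto simp: fixes_pt_def negative_pt_def)
  then show False using nofix qq_neg by blast
qed

end



context hom5 begin

lemma hyp: "hyperbolic (G i ** G (i - 1))"
proof -
  define M where "M = G i ** G (i - 1)"
  have MU: "unitary_U M" unfolding M_def by (rule unitary_mult[OF uni uni])
  have Mv: "M *v v = G i *v (G (i - 1) *v v)" for v by (simp add: M_def matrix_vector_mul_assoc)
  have nofixM: "\<And>w. negative_pt w \<Longrightarrow> fixes_pt M w \<Longrightarrow> False" using nofix unfolding M_def by blast
  obtain ki where ki: "ki \<noteq> 0" "\<And>v. G i *v (G i *v v) = ki *s v" using invol by blast
  obtain km where km: "km \<noteq> 0" "\<And>v. G (i - 1) *v (G (i - 1) *v v) = km *s v" using invol by blast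
  obtain x where fx: "fixes_pt M x" using eigen_exists by blast
  then obtain al where al: "M *v x = al *s x" and x0: "x \<noteq> 0" by (auto simp: fixes_pt_def)
  have xiso: "isotropic_pt x"
  proof -
    have "Re (herm x x) = 0"
    proof (rule ccontr)
      assume ne: "Re (herm x x) \<noteq> 0"
      show False
      proof (cases "Re (herm x x) < 0")
        case True
        then show False using nofixM fx x0 by (auto simp: negative_pt_def)
      next
        case False
        then have "Re (herm x x) > 0" using ne by simp
        then show False using pos_eigen_gives_neg[OF MU fx] nofixM by blast
      qed
    qed
    then have "herm x x = 0" using herm_self_real[of x] by (simp add: complex_eq_iff)
    then show ?thesis using x0 by (simp add: isotropic_pt_def)
  qed
  have al0: "al \<noteq> 0"
  proof
    assume "al = 0" then have "M *v x = 0" using al by simp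
    then show False using unitary_inj[OF MU] x0 by blast
  qed
  define y where "y = G i *v x"
  define be where "be = ki * km / al"
  have Gy: "G (i - 1) *v y = be *s x"
  proof -
    have "G (i - 1) *v (G i *v (M *v x)) = (ki * km) *s x"
      by (simp add: Mv ki(2) km(2) mv_smult)
    moreover have "G (i - 1) *v (G i *v (M *v x)) = al *s (G (i - 1) *v y)"
      by (simp add: al mv_smult y_def)
    ultimately have "al *s (G (i - 1) *v y) = (ki * km) *s x" by simp
    then have "(1 / al) *s (al *s (G (i - 1) *v y)) = (1 / al) *s ((ki * km) *s x)" by simp
    then show ?thesis using al0 by (simp add: be_def)
  qed
  have My: "M *v y = be *s y"
  proof -
    have "M *v y = G i *v (G (i - 1) *v y)" by (rule Mv)
    also have "\<dots> = G i *v (be *s x)" by (simp only: Gy)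
    finally show ?thesis by (simp add: mv_smult y_def)
  qed
  have y0: "y \<noteq> 0" using unitary_inj[OF uni] x0 by (auto simp: y_def)
  have yiso: "isotropic_pt y" using unitary_isotropic[OF uni xiso] by (simp add: y_def)
  have fy: "fixes_pt M y" using My y0 by (auto simp: fixes_pt_def)
  have npxy: "\<not> proj_eq x y"
  proof
    assume "proj_eq x y"
    then obtain c where c: "y = c *s x" by (auto simp: proj_eq_def)
    obtain q l where q: "negative_pt q" "l \<noteq> 0" "G i *v q = l *s q" "G i *v perp q = (- l) *s perp q"
      using struct by blast
    have "G i *v x = c *s x" using c by (simp add: y_def)
    then show False by (rule inv_iso_not_eigen[OF uni q xiso])
  qed
  have D: "x$1 * y$2 - x$2 * y$1 \<noteq> 0" by (rule not_proj_D[OF x0 y0 npxy])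
  have decomp: "\<exists>a b. v = a *s x + b *s y" for v
    using indep_decomp[OF D, of v] by blast
  have Mlin: "M *v (a *s x + b *s y) = (a * al) *s x + (b * be) *s y" for a b
    by (simp add: mv_add mv_smult al My)
  have all: "proj_eq z x \<or> proj_eq z y" if zc: "cball_pt z" and fz: "fixes_pt M z" for z
  proof -
    obtain ga where ga: "M *v z = ga *s z" and z0: "z \<noteq> 0" using fz by (auto simp: fixes_pt_def)
    obtain a b where ab: "z = a *s x + b *s y" using decomp by blast
    have "(a * al) *s x + (b * be) *s y = (ga * a) *s x + (ga * b) *s y"
      using ga Mlin[of a b] ab by (simp add: vector_add_ldistrib)
    then have "(a * al - ga * a) *s x + (b * be - ga * b) *s y = 0"
      by (simp add: vec2_eq algebra_simps)
    then have e: "a * al - ga * a = 0" "b * be - ga * b = 0" using indep_unique[OF D] by blast+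
    show ?thesis
    proof (cases "a = 0")
      case True
      then have zb: "z = b *s y" using ab by simp
      then have "b \<noteq> 0" using z0 by auto
      then have "y = (1 / b) *s z" using zb by simp
      then have "proj_eq z y" using z0 y0 \<open>b \<noteq> 0\<close> unfolding proj_eq_def
        by (intro conjI exI[of _ "1 / b"]) simp_all
      then show ?thesis by simp
    next
      case a0: False
      show ?thesis
      proof (cases "b = 0")
        case True
        then have za: "z = a *s x" using ab by simp
        then have "x = (1 / a) *s z" using a0 by simp
        then have "proj_eq z x" using z0 x0 a0 unfolding proj_eq_def
          by (intro conjI exI[of _ "1 / a"]) simp_all
        then show ?thesis by simp
      next
        case b0: False
        have e1: "al = ga" using e(1) a0 by (simp add: algebra_simps)
        have e2: "be = ga" using e(2) b0 by (simp add: algebra_simps)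
        obtain a' b' where o: "origin_pt = a' *s x + b' *s y" using decomp by blast
        have "M *v origin_pt = (a' * al) *s x + (b' * be) *s y"
          by (subst o) (rule Mlin)
        also have "\<dots> = ga *s origin_pt"
          by (subst o) (simp add: e1 e2 vec2_eq algebra_simps)
        finally have "M *v origin_pt = ga *s origin_pt" .
        then have "fixes_pt M origin_pt" using origin_negative by (auto simp: fixes_pt_def negative_pt_def)
        then show ?thesis using nofixM origin_negative by blast
      qed
    qed
  qed
  show ?thesis unfolding hyperbolic_def M_def[symmetric]
    using xiso yiso npxy fx fy all by blast
qed

lemma pos:
  assumes x: "isotropic_pt x" and fx: "fixes_pt (G i ** G (i - 1)) x"
  shows "positive_cycle (map (chain G i x) [2..<n])"
proof -
  have ch: "chain G i x = sq G (i - 2) x" by (rule ext) (rule chain_sq)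
  define ps where "ps = map (sq G (i - 2) x) [2..<n]"
  have xc: "cball_pt x" using x by (simp add: cball_pt_def)
  have len: "length ps = n - 2" by (simp add: ps_def)
  have "poly_area origin_pt ps = Lsum G n (i - 2) x" unfolding ps_def by (rule chain_reduce[OF xc fx, symmetric])
  also have "\<dots> = area_rho G n" using Lsum_const[OF xc] area_rho_Lsum by simp
  also have "\<dots> = (real (length ps) - 2) * pi" using area len n5 by (simp add: of_nat_diff)
  finally have A: "poly_area origin_pt ps = (real (length ps) - 2) * pi" .
  have iso: "\<forall>p\<in>set ps. isotropic_pt p" using sq_unitary_iso[OF x] by (auto simp: ps_def)
  have "positive_cycle ps" by (rule ideal_positive) (use len n5 iso A in auto)
  then show ?thesis by (simp add: ch ps_def)
qed

end

theorem lemma3p9: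
  fixes n :: nat and G :: "int \<Rightarrow> complex ^ 2 ^ 2"
  assumes "n \<ge> 5"
    and "is_hom_H n G"
    and "area_rho G n = (real n - 4) * pi"
  shows "(\<exists>q :: int \<Rightarrow> complex ^ 2.
            (\<forall>i. negative_pt (q i) \<and> pu_eq (G i) (refl_mat (q i))) \<and>
            (\<forall>i. \<not> proj_eq (q (i - 1)) (q i))) \<and>
         (\<forall>i. hyperbolic (G i ** G (i - 1))) \<and>
         (\<forall>i x. isotropic_pt x \<and> fixes_pt (G i ** G (i - 1)) x \<longrightarrow>
            positive_cycle (map (chain G i x) [2..<n]))"
proof -
  interpret hom5 n G
    by unfold_locales (use assms in auto)
  show ?thesis
    using qq_neg qq_pu qq_distinct hyp pos by blast
qed



end
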